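(* Let $p$ be a prime and let $e\geq 2$ and $d\geq 2$ be integers. Let $\mathcal P(p^e,d)\subset\mathbb R^d$ be the convex hull of all $d$-dimensional vector-factorisations of $p^e$, and for $0\le k\le d$ let $f_k$ be the number of $k$-dimensional faces of $\mathcal P(p^e,d)$. Then $$f_0={e+d-1\choose d-1},\qquad f_1={d\choose 2}+{d\choose 2}{e+d-2\choose d-1},$$ $$f_k={d+1\choose k+1}+{d\choose k+1}{e+d-1\choose d}-{d\choose k+1}{e-k+d-1\choose d}\quad\text{for }2\leq k<d,$$ $$f_d=1.$$
   Context: $\mathbb N=\{0,1,2,\dots\}$. A $d$-dimensional vector-factorisation of an integer $N\geq1$ is an integral vector $(v_1,\dots,v_d)\in\mathbb N^d$ with $v_1v_2\cdots v_d=N$. *)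

theory Defs
  imports "HOL-Analysis.Analysis" "HOL-Computational_Algebra.Primes"
begin

definition vec_factorisations :: "nat \<Rightarrow> (real ^ 'd::finite) set" where
  "vec_factorisations N =
     {(\<chi> i. real (v i)) | v :: 'd \<Rightarrow> nat. (\<Prod>i\<in>UNIV. v i) = N}"

definition factorisation_polytope :: "nat \<Rightarrow> (real ^ 'd::finite) set" where
  "factorisation_polytope N = convex hull (vec_factorisations N :: (real ^ 'd) set)"

definition num_faces :: "nat \<Rightarrow> ('a::euclidean_space) set \<Rightarrow> nat" where
  "num_faces k S = card {F. F face_of S \<and> aff_dim F = int k}"

end

theory Submission
  imports Defs
begin


definition comps :: "nat \<Rightarrow> ('d::finite \<Rightarrow> nat) set" where
  "comps n = {a. sum a UNIV = n}"

definition pt :: "real \<Rightarrow> ('d::finite \<Rightarrow> nat) \<Rightarrow> real^'d" where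
  "pt p a = (\<chi> i. p ^ a i)"

lemma finite_comps: "finite (comps n :: ('d::finite \<Rightarrow> nat) set)"
proof -
  have "comps n \<subseteq> PiE (UNIV::'d set) (\<lambda>_. {..n})"
  proof
    fix a :: "'d \<Rightarrow> nat" assume "a \<in> comps n"
    then have "a i \<le> n" for i unfolding comps_def
      using member_le_sum[of i UNIV a] by simp
    then show "a \<in> PiE UNIV (\<lambda>_. {..n})" by (auto simp: PiE_def extensional_def)
  qed
  then show ?thesis by (rule finite_subset) (simp add: finite_PiE)
qed

lemma vf_eq:
  assumes "prime p"
  shows "vec_factorisations (p ^ e) = pt (real p) ` (comps e :: ('d::finite \<Rightarrow> nat) set)"
proof
  show "pt (real p) ` comps e \<subseteq> (vec_factorisations (p ^ e) :: (real^'d) set)"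
  proof
    fix x assume "x \<in> pt (real p) ` (comps e :: ('d \<Rightarrow> nat) set)"
    then obtain a :: "'d \<Rightarrow> nat" where a: "sum a UNIV = e" "x = pt (real p) a"
      by (auto simp: comps_def)
    have "(\<Prod>i\<in>UNIV. p ^ a i) = p ^ e" using a(1) by (metis power_sum)
    moreover have "x = (\<chi> i. real (p ^ a i))" using a(2) by (simp add: pt_def)
    ultimately show "x \<in> vec_factorisations (p ^ e)" unfolding vec_factorisations_def
      by (intro CollectI exI[of _ "\<lambda>i. p ^ a i"]) simp
  qed
next
  show "(vec_factorisations (p ^ e) :: (real^'d) set) \<subseteq> pt (real p) ` comps e"
  proof
    fix x assume "x \<in> (vec_factorisations (p ^ e) :: (real^'d) set)"
    then obtain v :: "'d \<Rightarrow> nat" where v: "(\<Prod>i\<in>UNIV. v i) = p ^ e" "x = (\<chi> i. real (v i))"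
      unfolding vec_factorisations_def by blast
    have "\<exists>k. v i = p ^ k" for i
    proof -
      have "v i dvd (\<Prod>i\<in>UNIV. v i)" by (rule dvd_prodI) auto
      then have "v i dvd p ^ e" using v(1) by simp
      then show ?thesis using divides_primepow_nat[OF assms] by blast
    qed
    then obtain a where a: "\<And>i. v i = p ^ a i" by metis
    have "p ^ sum a UNIV = p ^ e" using v(1) by (simp add: a power_sum)
    moreover have "p > 1" using assms prime_gt_1_nat by blast
    ultimately have "sum a UNIV = e" using power_inject_exp by blast
    moreover have "x = pt (real p) a" using v(2) by (simp add: pt_def a)
    ultimately show "x \<in> pt (real p) ` comps e" by (auto simp: comps_def)
  qed
qed


definition argmx :: "real \<Rightarrow> nat \<Rightarrow> real^'d \<Rightarrow> ('d::finite \<Rightarrow> nat) set" where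
  "argmx p e c = {a \<in> comps e. \<forall>b\<in>comps e. c \<bullet> pt p b \<le> c \<bullet> pt p a}"

definition dl :: "nat \<Rightarrow> 'd \<Rightarrow> ('d::finite \<Rightarrow> nat)" where
  "dl e i = (\<lambda>j. if j = i then e else 0)"

lemma dl_comps: "dl e i \<in> comps e"
  by (simp add: dl_def comps_def)

lemma comps_ne: "comps e \<noteq> {}"
  using dl_comps by blast

lemma argmx_ne: "argmx p e c \<noteq> {}"
proof -
  let ?f = "\<lambda>a. c \<bullet> pt p a"
  have fin: "finite (?f ` comps e)" using finite_comps by blast
  have ne: "?f ` comps e \<noteq> {}" using comps_ne by blast
  obtain a where a: "a \<in> comps e" "?f a = Max (?f ` comps e)"
    using Max_in[OF fin ne] by auto
  have "\<forall>b\<in>comps e. ?f b \<le> ?f a" using a(2) Max_ge[OF fin] by auto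
  then show ?thesis using a(1) unfolding argmx_def by blast
qed

lemma argmx_sub: "argmx p e c \<subseteq> comps e"
  by (auto simp: argmx_def)

lemma pt_inj: assumes "p > 1" shows "inj (pt p)"
proof
  fix a b assume "pt p a = pt p b"
  then have "p ^ a i = p ^ b i" for i by (metis pt_def vec_lambda_beta)
  then show "a = b" using power_inject_exp[OF assms] by blast
qed

lemma exposed_hull:
  fixes T :: "(real^'d) set"
  assumes "finite T" "convex hull T \<subseteq> {x. c \<bullet> x \<le> \<beta>}"
  shows "convex hull T \<inter> {x. c \<bullet> x = \<beta>} = convex hull {t\<in>T. c \<bullet> t = \<beta>}"
proof
  let ?F = "convex hull T \<inter> {x. c \<bullet> x = \<beta>}"
  have fo: "?F face_of convex hull T"
    by (rule face_of_Int_supporting_hyperplane_le) (use assms in auto)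
  obtain S' where S': "S' \<subseteq> T" "?F = convex hull S'"
    using face_of_convex_hull_subset[OF finite_imp_compact[OF assms(1)] fo] by blast
  have "S' \<subseteq> {t\<in>T. c \<bullet> t = \<beta>}"
    using S' hull_subset[of S' convex] by auto
  then show "?F \<subseteq> convex hull {t\<in>T. c \<bullet> t = \<beta>}" using S'(2) hull_mono by metis
next
  show "convex hull {t\<in>T. c \<bullet> t = \<beta>} \<subseteq> convex hull T \<inter> {x. c \<bullet> x = \<beta>}"
  proof (rule hull_minimal)
    show "{t \<in> T. c \<bullet> t = \<beta>} \<subseteq> convex hull T \<inter> {x. c \<bullet> x = \<beta>}"
      using hull_subset[of T convex] by auto
    show "convex (convex hull T \<inter> {x. c \<bullet> x = \<beta>})"
      by (simp add: convex_Int convex_hyperplane)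
  qed
qed

lemma argmx_face:
  assumes "a0 \<in> argmx p e c"
  shows "convex hull (pt p ` argmx p e c) = convex hull (pt p ` comps e) \<inter> {x. c \<bullet> x = c \<bullet> pt p a0}"
    and "convex hull (pt p ` argmx p e c) face_of convex hull (pt p ` comps e)"
proof -
  let ?T = "pt p ` comps e" and ?\<beta> = "c \<bullet> pt p a0"
  have le: "\<forall>t\<in>?T. c \<bullet> t \<le> ?\<beta>" using assms by (auto simp: argmx_def)
  have hl: "convex hull ?T \<subseteq> {x. c \<bullet> x \<le> ?\<beta>}"
    by (rule hull_minimal) (use le convex_halfspace_le in auto)
  have eq: "{t\<in>?T. c \<bullet> t = ?\<beta>} = pt p ` argmx p e c"
  proof
    show "{t\<in>?T. c \<bullet> t = ?\<beta>} \<subseteq> pt p ` argmx p e c"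
      using le by (auto simp: argmx_def)
    show "pt p ` argmx p e c \<subseteq> {t\<in>?T. c \<bullet> t = ?\<beta>}"
    proof
      fix t assume "t \<in> pt p ` argmx p e c"
      then obtain b where b: "b \<in> argmx p e c" "t = pt p b" by auto
      have "c \<bullet> pt p a0 \<le> c \<bullet> pt p b" using b(1) assms by (auto simp: argmx_def)
      moreover have "c \<bullet> pt p b \<le> c \<bullet> pt p a0" using b(1) le by (auto simp: argmx_def)
      ultimately show "t \<in> {t\<in>?T. c \<bullet> t = ?\<beta>}" using b argmx_sub by fastforce
    qed
  qed
  show 1: "convex hull (pt p ` argmx p e c) = convex hull ?T \<inter> {x. c \<bullet> x = ?\<beta>}"
    using exposed_hull[OF _ hl] finite_comps eq by auto
  show "convex hull (pt p ` argmx p e c) face_of convex hull ?T"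
    unfolding 1 by (rule face_of_Int_supporting_hyperplane_le) (use hl in auto)
qed

lemma face_argmx:
  assumes "F face_of convex hull (pt p ` comps e)" "F \<noteq> {}"
  shows "\<exists>c. F = convex hull (pt p ` argmx p e c)"
proof -
  let ?T = "pt p ` comps e"
  have "polyhedron (convex hull ?T)"
    by (intro polytope_imp_polyhedron polytope_convex_hull finite_imageI finite_comps)
  then have "F exposed_face_of convex hull ?T"
    using assms(1) exposed_face_of_polyhedron by blast
  then have "\<exists>c \<beta>. convex hull ?T \<subseteq> {x. c \<bullet> x \<le> \<beta>} \<and> F = convex hull ?T \<inter> {x. c \<bullet> x = \<beta>}"
    unfolding exposed_face_of
  proof (elim conjE disjE exE)
    assume "F = convex hull ?T"
    then show ?thesis by (intro exI[of _ 0]) auto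
  qed (use assms(2) in auto)
  then obtain c \<beta> where cb: "convex hull ?T \<subseteq> {x. c \<bullet> x \<le> \<beta>}" "F = convex hull ?T \<inter> {x. c \<bullet> x = \<beta>}"
    by blast
  have F: "F = convex hull {t\<in>?T. c \<bullet> t = \<beta>}"
    using exposed_hull[OF _ cb(1)] cb(2) finite_comps by auto
  have "{t\<in>?T. c \<bullet> t = \<beta>} \<noteq> {}" using F assms(2) by auto
  then obtain a0 where a0: "a0 \<in> comps e" "c \<bullet> pt p a0 = \<beta>" by auto
  have le: "\<forall>b\<in>comps e. c \<bullet> pt p b \<le> \<beta>"
    using cb(1) hull_subset[of ?T convex] by auto
  have "{t\<in>?T. c \<bullet> t = \<beta>} = pt p ` argmx p e c"
  proof
    show "{t\<in>?T. c \<bullet> t = \<beta>} \<subseteq> pt p ` argmx p e c"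
      using le by (auto simp: argmx_def)
    show "pt p ` argmx p e c \<subseteq> {t\<in>?T. c \<bullet> t = \<beta>}"
    proof
      fix t assume "t \<in> pt p ` argmx p e c"
      then obtain b where b: "b \<in> argmx p e c" "t = pt p b" by auto
      have "c \<bullet> pt p a0 \<le> c \<bullet> pt p b" using b(1) a0 by (auto simp: argmx_def)
      moreover have "c \<bullet> pt p b \<le> \<beta>" using b(1) le by (auto simp: argmx_def)
      ultimately show "t \<in> {t\<in>?T. c \<bullet> t = \<beta>}" using b a0 argmx_sub by fastforce
    qed
  qed
  then show ?thesis using F by auto
qed

lemma hull_inj:
  fixes M1 M2 :: "('d::finite \<Rightarrow> nat) set"
  assumes p: "p > 1"
    and sing: "\<And>a::'d \<Rightarrow> nat. a \<in> comps e \<Longrightarrow> \<exists>c. argmx p e c = {a}"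
    and M: "M1 \<subseteq> comps e" "M2 \<subseteq> comps e"
    and eq: "convex hull (pt p ` M1) = convex hull (pt p ` M2)"
  shows "M1 \<subseteq> M2"
proof
  fix a assume a: "a \<in> M1"
  have "a \<in> comps e" using a M(1) by blast
  then obtain c where c: "argmx p e c = {a}" using sing by blast
  have "convex hull (pt p ` {a}) face_of convex hull (pt p ` comps e)"
    using argmx_face(2)[of a p e c] c by auto
  then have ext: "pt p a extreme_point_of convex hull (pt p ` comps e)"
    by (simp add: face_of_singleton)
  have in2: "pt p a \<in> convex hull (pt p ` M2)"
    using a eq hull_subset[of "pt p ` M1" convex] by auto
  have sub: "convex hull (pt p ` M2) \<subseteq> convex hull (pt p ` comps e)"
    using M(2) hull_mono image_mono by metis
  have "pt p a extreme_point_of convex hull (pt p ` M2)"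
    using ext in2 sub unfolding extreme_point_of_def by blast
  then have "pt p a \<in> pt p ` M2" by (rule extreme_point_of_convex_hull)
  then show "a \<in> M2" using pt_inj[OF p] by (auto dest: injD)
qed

lemma num_faces_argmx:
  assumes p: "p > 1"
    and sing: "\<And>a::'d::finite \<Rightarrow> nat. a \<in> comps e \<Longrightarrow> \<exists>c. argmx p e c = {a}"
  shows "num_faces k (convex hull (pt p ` comps e) :: (real^'d) set)
         = card {M::('d \<Rightarrow> nat) set. M \<in> range (argmx p e) \<and> aff_dim (pt p ` M) = int k}"
proof -
  let ?P = "convex hull (pt p ` comps e) :: (real^'d) set"
  let ?h = "\<lambda>M::('d \<Rightarrow> nat) set. convex hull (pt p ` M)"
  let ?A = "{M::('d \<Rightarrow> nat) set. M \<in> range (argmx p e) \<and> aff_dim (pt p ` M) = int k}"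
  have img: "{F. F face_of ?P \<and> aff_dim F = int k} = ?h ` ?A"
  proof
    show "{F. F face_of ?P \<and> aff_dim F = int k} \<subseteq> ?h ` ?A"
    proof
      fix F assume F: "F \<in> {F. F face_of ?P \<and> aff_dim F = int k}"
      then have "F \<noteq> {}" by auto
      then obtain c where c: "F = ?h (argmx p e c)" using face_argmx F by blast
      then show "F \<in> ?h ` ?A" using F by (auto simp: aff_dim_convex_hull)
    qed
    show "?h ` ?A \<subseteq> {F. F face_of ?P \<and> aff_dim F = int k}"
    proof
      fix F assume "F \<in> ?h ` ?A"
      then obtain c where c: "F = ?h (argmx p e c)" "aff_dim (pt p ` argmx p e c) = int k" by auto
      obtain a0 where "a0 \<in> argmx p e c" using argmx_ne by blast
      then have "F face_of ?P" using argmx_face(2) c(1) by blast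
      then show "F \<in> {F. F face_of ?P \<and> aff_dim F = int k}" using c by (simp add: aff_dim_convex_hull)
    qed
  qed
  have inj: "inj_on ?h ?A"
  proof (rule inj_onI)
    fix M1 M2 assume "M1 \<in> ?A" "M2 \<in> ?A" "?h M1 = ?h M2"
    moreover then have "M1 \<subseteq> comps e" "M2 \<subseteq> comps e" by (auto simp: argmx_def)
    ultimately show "M1 = M2" using hull_inj[OF p sing] by (metis subset_antisym)
  qed
  show ?thesis unfolding num_faces_def img using card_image[OF inj] by simp
qed


lemma bern1:
  fixes p :: real assumes "p > 1"
  shows "real n * (p - 1) \<le> p ^ n - 1" and "n \<ge> 2 \<Longrightarrow> real n * (p - 1) < p ^ n - 1"
proof -
  have *: "real n * (p - 1) \<le> p ^ n - 1 \<and> (n \<ge> 2 \<longrightarrow> real n * (p - 1) < p ^ n - 1)"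
  proof (induction n)
    case 0 then show ?case by simp
  next
    case (Suc n)
    have pn: "p ^ n \<ge> 1" using assms by simp
    have eq: "p ^ Suc n - 1 = p * (p ^ n - 1) + (p - 1)" by (simp add: algebra_simps)
    have a: "p * (p ^ n - 1) \<ge> p ^ n - 1" using pn assms by (simp add: mult_right_mono[of 1 p "p^n - 1", simplified])
    have b: "n \<ge> 1 \<Longrightarrow> p * (p ^ n - 1) > p ^ n - 1"
    proof -
      assume "n \<ge> 1"
      then have "p ^ n > 1" using assms by (simp add: one_less_power)
      then show ?thesis using assms by (simp add: mult_strict_right_mono[of 1 p "p^n - 1", simplified])
    qed
    show ?case
    proof (intro conjI impI)
      show "real (Suc n) * (p - 1) \<le> p ^ Suc n - 1"
        using Suc.IH a eq by (simp add: algebra_simps)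
      assume "2 \<le> Suc n"
      then have "n \<ge> 1" by simp
      then show "real (Suc n) * (p - 1) < p ^ Suc n - 1"
        using Suc.IH b eq by (simp add: algebra_simps)
    qed
  qed
  then show "real n * (p - 1) \<le> p ^ n - 1" and "n \<ge> 2 \<Longrightarrow> real n * (p - 1) < p ^ n - 1" by auto
qed

lemma bern2:
  fixes p :: real assumes "p > 1"
  shows "p ^ Suc n - 1 \<le> real (Suc n) * (p - 1) * p ^ n" and "n \<ge> 1 \<Longrightarrow> p ^ Suc n - 1 < real (Suc n) * (p - 1) * p ^ n"
proof -
  have *: "p ^ Suc n - 1 \<le> real (Suc n) * (p - 1) * p ^ n \<and> (n \<ge> 1 \<longrightarrow> p ^ Suc n - 1 < real (Suc n) * (p - 1) * p ^ n)"
  proof (induction n)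
    case 0 then show ?case by simp
  next
    case (Suc n)
    have pn: "p ^ Suc n > 1" using one_less_power[OF assms, of "Suc n"] by simp
    have eq: "p ^ Suc (Suc n) - 1 = p * (p ^ Suc n - 1) + (p - 1)" by (simp add: algebra_simps)
    have "p * (p ^ Suc n - 1) \<le> p * (real (Suc n) * (p - 1) * p ^ n)"
      using Suc.IH assms by (intro mult_left_mono) auto
    also have "\<dots> = real (Suc n) * (p - 1) * p ^ Suc n" by (simp add: algebra_simps)
    finally have 1: "p * (p ^ Suc n - 1) \<le> real (Suc n) * (p - 1) * p ^ Suc n" .
    have 2: "p - 1 < (p - 1) * p ^ Suc n" using pn assms by simp
    have "p ^ Suc (Suc n) - 1 < real (Suc (Suc n)) * (p - 1) * p ^ Suc n"
      using 1 2 eq by (simp add: algebra_simps)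
    then show ?case by simp
  qed
  then show "p ^ Suc n - 1 \<le> real (Suc n) * (p - 1) * p ^ n" and "n \<ge> 1 \<Longrightarrow> p ^ Suc n - 1 < real (Suc n) * (p - 1) * p ^ n" by auto
qed

lemma h1:
  fixes p w lam :: real and b :: nat
  assumes p: "p > 1" and w: "w > 0" and hi: "lam \<le> w * (p - 1) * p ^ b"
    and lo: "b = 0 \<or> w * (p - 1) * p ^ (b - 1) \<le> lam"
  shows "w * p ^ b - lam * real b \<le> w * p ^ t - lam * real t"
    and "w * p ^ t - lam * real t = w * p ^ b - lam * real b \<longleftrightarrow>
         t = b \<or> (t = Suc b \<and> lam = w * (p - 1) * p ^ b) \<or> (b \<ge> 1 \<and> t = b - 1 \<and> lam = w * (p - 1) * p ^ (b - 1))"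
proof -
  have wpb: "w * p ^ b > 0" using w p by simp
  have geq: "w * p ^ (b + n) - lam * real (b + n) - (w * p ^ b - lam * real b)
      = w * p ^ b * (p ^ n - 1) - lam * real n" for n by (simp add: algebra_simps power_add)
  have ge1: "w * p ^ (b + n) - lam * real (b + n) - (w * p ^ b - lam * real b)
      \<ge> real n * (w * (p - 1) * p ^ b - lam)" for n
  proof -
    have "w * p ^ b * (real n * (p - 1)) \<le> w * p ^ b * (p ^ n - 1)"
      using bern1(1)[OF p, of n] wpb by (intro mult_left_mono) auto
    then show ?thesis unfolding geq by (simp add: algebra_simps)
  qed
  have ge1s: "n \<ge> 2 \<Longrightarrow> w * p ^ (b + n) - lam * real (b + n) - (w * p ^ b - lam * real b)
      > real n * (w * (p - 1) * p ^ b - lam)" for n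
  proof -
    assume "n \<ge> 2"
    then have "w * p ^ b * (real n * (p - 1)) < w * p ^ b * (p ^ n - 1)"
      using bern1(2)[OF p, of n] wpb by (intro mult_strict_left_mono) auto
    then show ?thesis unfolding geq by (simp add: algebra_simps)
  qed
  have leq: "b = t + Suc n \<Longrightarrow> w * p ^ t - lam * real t - (w * p ^ b - lam * real b)
      = lam * real (Suc n) - w * p ^ t * (p ^ Suc n - 1)" for n t
    by (simp add: algebra_simps power_add)
  have ge2: "b = t + Suc n \<Longrightarrow> w * p ^ t - lam * real t - (w * p ^ b - lam * real b)
      \<ge> real (Suc n) * (lam - w * (p - 1) * p ^ (b - 1))" for n t
  proof -
    assume bt: "b = t + Suc n"
    have "w * p ^ t * (p ^ Suc n - 1) \<le> w * p ^ t * (real (Suc n) * (p - 1) * p ^ n)"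
      using bern2(1)[OF p, of n] w p by (intro mult_left_mono) auto
    moreover have "p ^ (b - 1) = p ^ t * p ^ n" using bt by (simp add: power_add)
    ultimately show ?thesis unfolding leq[OF bt] by (simp add: algebra_simps)
  qed
  have ge2s: "b = t + Suc n \<Longrightarrow> n \<ge> 1 \<Longrightarrow> w * p ^ t - lam * real t - (w * p ^ b - lam * real b)
      > real (Suc n) * (lam - w * (p - 1) * p ^ (b - 1))" for n t
  proof -
    assume bt: "b = t + Suc n" and n: "n \<ge> 1"
    have "w * p ^ t * (p ^ Suc n - 1) < w * p ^ t * (real (Suc n) * (p - 1) * p ^ n)"
      using bern2(2)[OF p n] w p by (intro mult_strict_left_mono) auto
    moreover have "p ^ (b - 1) = p ^ t * p ^ n" using bt by (simp add: power_add)
    ultimately show ?thesis unfolding leq[OF bt] by (simp add: algebra_simps)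
  qed
  have hi': "w * (p - 1) * p ^ b - lam \<ge> 0" using hi by simp
  show main: "w * p ^ b - lam * real b \<le> w * p ^ t - lam * real t"
  proof (cases "b \<le> t")
    case True
    then obtain n where "t = b + n" using le_Suc_ex by blast
    then show ?thesis using ge1[of n] hi' by (smt (verit) mult_nonneg_nonneg of_nat_0_le_iff)
  next
    case False
    then obtain n where bt: "b = t + Suc n" by (metis add_Suc_right less_imp_Suc_add not_le)
    then have "w * (p - 1) * p ^ (b - 1) \<le> lam" using lo by simp
    then show ?thesis using ge2[OF bt] by (smt (verit) mult_nonneg_nonneg of_nat_0_le_iff)
  qed
  show "w * p ^ t - lam * real t = w * p ^ b - lam * real b \<longleftrightarrow>
         t = b \<or> (t = Suc b \<and> lam = w * (p - 1) * p ^ b) \<or> (b \<ge> 1 \<and> t = b - 1 \<and> lam = w * (p - 1) * p ^ (b - 1))"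
  proof
    assume eq: "w * p ^ t - lam * real t = w * p ^ b - lam * real b"
    show "t = b \<or> (t = Suc b \<and> lam = w * (p - 1) * p ^ b) \<or> (b \<ge> 1 \<and> t = b - 1 \<and> lam = w * (p - 1) * p ^ (b - 1))"
    proof (cases "b \<le> t")
      case True
      then obtain n where tn: "t = b + n" using le_Suc_ex by blast
      show ?thesis
      proof (cases "n \<ge> 2")
        case True
        then show ?thesis using ge1s[OF True] eq tn hi' by (smt (verit) mult_nonneg_nonneg of_nat_0_le_iff)
      next
        case False
        then have "n = 0 \<or> n = 1" by auto
        then show ?thesis
        proof
          assume "n = 1"
          then have "w * p ^ b * (p - 1) - lam = 0" using eq geq[of 1] tn by simp
          then show ?thesis using tn \<open>n = 1\<close> by (simp add: algebra_simps)
        qed (use tn in simp)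
      qed
    next
      case False
      then obtain n where bt: "b = t + Suc n" by (metis add_Suc_right less_imp_Suc_add not_le)
      then have low: "w * (p - 1) * p ^ (b - 1) \<le> lam" using lo by simp
      show ?thesis
      proof (cases "n \<ge> 1")
        case True
        then show ?thesis using ge2s[OF bt True] eq low by (smt (verit) mult_nonneg_nonneg of_nat_0_le_iff)
      next
        case False
        then have n0: "n = 0" by simp
        then have "lam - w * p ^ t * (p - 1) = 0" using eq leq[OF bt] by simp
        moreover have "p ^ (b - 1) = p ^ t" using bt n0 by simp
        ultimately show ?thesis using bt n0 by (simp add: algebra_simps)
      qed
    qed
  next
    assume "t = b \<or> (t = Suc b \<and> lam = w * (p - 1) * p ^ b) \<or> (b \<ge> 1 \<and> t = b - 1 \<and> lam = w * (p - 1) * p ^ (b - 1))"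
    then show "w * p ^ t - lam * real t = w * p ^ b - lam * real b"
    proof (elim disjE conjE)
      assume "t = Suc b" "lam = w * (p - 1) * p ^ b"
      then show ?thesis by (simp add: algebra_simps)
    next
      assume a: "b \<ge> 1" "t = b - 1" "lam = w * (p - 1) * p ^ (b - 1)"
      then obtain m where m: "b = Suc m" by (cases b) auto
      then show ?thesis using a by (simp add: algebra_simps)
    qed simp
  qed
qed


definition side :: "nat \<Rightarrow> 'd set \<Rightarrow> ('d::finite \<Rightarrow> nat) set" where
  "side e I = {a \<in> comps e. \<forall>i. a i \<noteq> 0 \<longrightarrow> i \<in> I}"

definition box :: "nat \<Rightarrow> ('d \<Rightarrow> nat) \<Rightarrow> 'd set \<Rightarrow> ('d::finite \<Rightarrow> nat) set" where
  "box e b J = {a \<in> comps e. \<forall>i. a i = b i \<or> (i \<in> J \<and> a i = Suc (b i))}"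

lemma val: "c \<bullet> pt p a = (\<Sum>i\<in>UNIV. c$i * p ^ a i)"
  by (simp add: inner_vec_def pt_def)

lemma val_split: "c \<bullet> pt p a = (\<Sum>i\<in>UNIV. c$i) + (\<Sum>i\<in>UNIV. c$i * (p ^ a i - 1))"
  unfolding val by (simp add: sum.distrib[symmetric] algebra_simps)

lemma val_dl: "c \<bullet> pt p (dl e i) = (\<Sum>j\<in>UNIV. c$j) + c$i * (p ^ e - 1)"
proof -
  have "(\<Sum>j\<in>UNIV. c$j * (p ^ dl e i j - 1)) = (\<Sum>j\<in>UNIV. if j = i then c$i * (p ^ e - 1) else 0)"
    by (rule sum.cong) (auto simp: dl_def)
  then show ?thesis unfolding val_split by simp
qed

lemma superadd:
  fixes p :: real assumes p: "p > 1" and fin: "finite A"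
  shows "(\<Sum>i\<in>A. p ^ a i - 1) \<le> p ^ sum a A - 1 \<and>
    ((\<Sum>i\<in>A. p ^ a i - 1) = p ^ sum a A - 1 \<longrightarrow> (\<forall>i\<in>A. \<forall>j\<in>A. a i \<noteq> 0 \<longrightarrow> a j \<noteq> 0 \<longrightarrow> i = j))"
  using fin
proof (induction A rule: finite_induct)
  case empty then show ?case by simp
next
  case (insert x F)
  have p1: "k \<noteq> 0 \<Longrightarrow> p ^ k > 1" for k using one_less_power[OF p, of k] by simp
  define u where "u = p ^ a x - 1"
  define v where "v = p ^ sum a F - 1"
  define L where "L = (\<Sum>i\<in>F. p ^ a i - 1)"
  have u0: "u \<ge> 0" unfolding u_def using one_le_power[of p "a x"] p by simp
  have v0: "v \<ge> 0" unfolding v_def using one_le_power[of p "sum a F"] p by simp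
  have Lv: "L \<le> v" using conjunct1[OF insert.IH] unfolding L_def v_def .
  have lhs: "(\<Sum>i\<in>insert x F. p ^ a i - 1) = u + L"
    unfolding u_def L_def using insert.hyps by (rule sum.insert)
  have "p ^ sum a (insert x F) = p ^ a x * p ^ sum a F"
    using insert.hyps by (simp add: power_add)
  then have rhs: "p ^ sum a (insert x F) - 1 = u + v + u * v"
    unfolding u_def v_def by (simp add: algebra_simps)
  have uv: "u * v \<ge> 0" using u0 v0 by simp
  show ?case
  proof (intro conjI impI ballI)
    show "(\<Sum>i\<in>insert x F. p ^ a i - 1) \<le> p ^ sum a (insert x F) - 1"
      using lhs rhs Lv uv by linarith
    fix i j assume eq: "(\<Sum>i\<in>insert x F. p ^ a i - 1) = p ^ sum a (insert x F) - 1"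
      and ij: "i \<in> insert x F" "j \<in> insert x F" "a i \<noteq> 0" "a j \<noteq> 0"
    have Leq: "L = v" and uv0: "u * v = 0" using eq lhs rhs Lv uv by linarith+
    have IH2: "\<forall>i\<in>F. \<forall>j\<in>F. a i \<noteq> 0 \<longrightarrow> a j \<noteq> 0 \<longrightarrow> i = j"
      using conjunct2[OF insert.IH] Leq unfolding L_def v_def by blast
    have "u = 0 \<or> v = 0" using uv0 by simp
    then have "a x = 0 \<or> sum a F = 0"
    proof
      assume "u = 0" then have "p ^ a x = 1" by (simp add: u_def)
      then show ?thesis using p1[of "a x"] by auto
    next
      assume "v = 0" then have "p ^ sum a F = 1" by (simp add: v_def)
      then show ?thesis using p1[of "sum a F"] by auto
    qed
    then have ax: "a x = 0 \<or> (\<forall>k\<in>F. a k = 0)" using insert.hyps(1) sum_eq_0_iff by blast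
    show "i = j"
    proof (cases "a x = 0")
      case True
      then have iF: "i \<in> F" and jF: "j \<in> F" using ij by auto
      from IH2 iF jF ij(3) ij(4) show ?thesis by blast
    next
      case False
      then have z: "\<forall>k\<in>F. a k = 0" using ax by simp
      then have "i \<notin> F" "j \<notin> F" using ij(3,4) by auto
      then show ?thesis using ij(1,2) by simp
    qed
  qed
qed

lemma comps_single:
  assumes "a \<in> comps e" "e \<ge> 1" "\<forall>i j. a i \<noteq> 0 \<longrightarrow> a j \<noteq> 0 \<longrightarrow> i = j"
  shows "\<exists>j. a = dl e j"
proof -
  have "\<exists>j. a j \<noteq> 0"
  proof (rule ccontr)
    assume "\<not> (\<exists>j. a j \<noteq> 0)"
    then have "sum a UNIV = 0" by simp
    then show False using assms(1,2) by (simp add: comps_def)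
  qed
  then obtain j where j: "a j \<noteq> 0" by blast
  have z: "\<forall>k. k \<noteq> j \<longrightarrow> a k = 0" using assms(3) j by blast
  have "sum a UNIV = (\<Sum>k\<in>UNIV. if k = j then a j else 0)"
    by (rule sum.cong) (use z in auto)
  then have "a j = e" using assms(1) by (simp add: comps_def)
  then have "a = dl e j" using z by (auto simp: dl_def)
  then show ?thesis by blast
qed


lemma argmx_pos:
  fixes p :: real
  assumes p: "p > 1" and e: "e \<ge> 1" and mu: "\<mu> = Max (range (\<lambda>i. c$i))" "\<mu> > 0"
  shows "argmx p e (c::real^'d::finite) = dl e ` {i. c$i = \<mu>}"
proof -
  have cle: "c$i \<le> \<mu>" for i using Max_ge[of "range (\<lambda>i. c$i)" "c$i"] mu(1) by simp
  have "\<mu> \<in> range (\<lambda>i. c$i)" using Max_in[of "range (\<lambda>i. c$i)"] mu(1) by simp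
  then obtain i0 where i0: "c$i0 = \<mu>" by auto
  have pe: "p ^ e > 1" using one_less_power[OF p, of e] e by simp
  let ?B = "(\<Sum>i\<in>UNIV. c$i) + \<mu> * (p ^ e - 1)"
  have chain: "(\<Sum>i\<in>UNIV. c$i * (p ^ a i - 1)) \<le> \<mu> * (\<Sum>i\<in>UNIV. p ^ a i - 1)" for a :: "'d \<Rightarrow> nat"
    unfolding sum_distrib_left
    by (rule sum_mono) (use cle p in \<open>auto intro!: mult_right_mono\<close>)
  have sa: "(\<Sum>i\<in>UNIV. p ^ a i - 1) \<le> p ^ e - 1" if "a \<in> comps e" for a :: "'d \<Rightarrow> nat"
    using superadd[OF p, of UNIV a] that by (simp add: comps_def)
  have bound: "c \<bullet> pt p a \<le> ?B" if "a \<in> comps e" for a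
  proof -
    have "\<mu> * (\<Sum>i\<in>UNIV. p ^ a i - 1) \<le> \<mu> * (p ^ e - 1)" using sa[OF that] mu(2) by simp
    then show ?thesis unfolding val_split using chain[of a] by linarith
  qed
  have vi0: "c \<bullet> pt p (dl e i0) = ?B" by (simp add: val_dl i0)
  show ?thesis
  proof
    show "argmx p e c \<subseteq> dl e ` {i. c$i = \<mu>}"
    proof
      fix a assume a: "a \<in> argmx p e c"
      then have ac: "a \<in> comps e" by (simp add: argmx_def)
      have "c \<bullet> pt p (dl e i0) \<le> c \<bullet> pt p a" using a dl_comps by (auto simp: argmx_def)
      then have vB: "c \<bullet> pt p a = ?B" using bound[OF ac] vi0 by linarith
      have "\<mu> * (p ^ e - 1) \<le> \<mu> * (\<Sum>i\<in>UNIV. p ^ a i - 1)"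
        using vB chain[of a] unfolding val_split by linarith
      then have "p ^ e - 1 \<le> (\<Sum>i\<in>UNIV. p ^ a i - 1)" using mu(2) by simp
      then have "(\<Sum>i\<in>UNIV. p ^ a i - 1) = p ^ sum a UNIV - 1" using sa[OF ac] ac by (simp add: comps_def)
      then have "\<forall>i j. a i \<noteq> 0 \<longrightarrow> a j \<noteq> 0 \<longrightarrow> i = j" using superadd[OF p, of UNIV a] by simp
      then obtain j where j: "a = dl e j" using comps_single[OF ac e] by blast
      have "c \<bullet> pt p (dl e j) = (\<Sum>i\<in>UNIV. c$i) + c$j * (p ^ e - 1)" by (rule val_dl)
      then have "c$j * (p ^ e - 1) = \<mu> * (p ^ e - 1)" using vB j by simp
      then have "c$j = \<mu>" using pe by simp
      then show "a \<in> dl e ` {i. c$i = \<mu>}" using j by blast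
    qed
    show "dl e ` {i. c$i = \<mu>} \<subseteq> argmx p e c"
    proof
      fix a assume "a \<in> dl e ` {i. c$i = \<mu>}"
      then obtain j where j: "a = dl e j" "c$j = \<mu>" by blast
      have "c \<bullet> pt p a = ?B" using j by (simp add: val_dl)
      then show "a \<in> argmx p e c" using bound j dl_comps by (auto simp: argmx_def)
    qed
  qed
qed


lemma argmx_zero:
  fixes p :: real
  assumes p: "p > 1" and mu: "0 = Max (range (\<lambda>i. c$i))"
  shows "argmx p e (c::real^'d::finite) = side e {i. c$i = 0}"
proof -
  have cle: "c$i \<le> 0" for i using Max_ge[of "range (\<lambda>i. c$i)" "c$i"] mu by simp
  have "0 \<in> range (\<lambda>i. c$i)" using Max_in[of "range (\<lambda>i. c$i)"] mu by simp
  then obtain i0 where i0: "c$i0 = 0" by auto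
  have tn: "c$i * (p ^ a i - 1) \<le> 0" for i and a :: "'d \<Rightarrow> nat"
    using cle[of i] p by (simp add: mult_nonpos_nonneg)
  have z: "c$i * (p ^ a i - 1) = 0 \<longleftrightarrow> (a i \<noteq> 0 \<longrightarrow> c$i = 0)" for i and a :: "'d \<Rightarrow> nat"
  proof -
    have "a i \<noteq> 0 \<Longrightarrow> p ^ a i > 1" using one_less_power[OF p, of "a i"] by simp
    then have "p ^ a i - 1 = 0 \<longleftrightarrow> a i = 0" by (cases "a i = 0") auto
    then show ?thesis by auto
  qed
  have S: "(\<Sum>i\<in>UNIV. c$i * (p ^ a i - 1)) \<le> 0" for a :: "'d \<Rightarrow> nat"
    by (rule sum_nonpos) (use tn in auto)
  have S0: "(\<Sum>i\<in>UNIV. c$i * (p ^ a i - 1)) = 0 \<longleftrightarrow> (\<forall>i. a i \<noteq> 0 \<longrightarrow> c$i = 0)" for a :: "'d \<Rightarrow> nat"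
  proof -
    have "(\<Sum>i\<in>UNIV. - (c$i * (p ^ a i - 1))) = 0 \<longleftrightarrow> (\<forall>i\<in>UNIV. - (c$i * (p ^ a i - 1)) = 0)"
      by (rule sum_nonneg_eq_0_iff) (use tn in auto)
    then show ?thesis using z by (simp add: sum_negf)
  qed
  have vi0: "c \<bullet> pt p (dl e i0) = (\<Sum>j\<in>UNIV. c$j)" by (simp add: val_dl i0)
  show ?thesis
  proof
    show "argmx p e c \<subseteq> side e {i. c$i = 0}"
    proof
      fix a assume a: "a \<in> argmx p e c"
      then have ac: "a \<in> comps e" by (simp add: argmx_def)
      have "c \<bullet> pt p (dl e i0) \<le> c \<bullet> pt p a" using a dl_comps by (auto simp: argmx_def)
      then have "(\<Sum>i\<in>UNIV. c$i * (p ^ a i - 1)) = 0" using vi0 S[of a] unfolding val_split by linarith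
      then show "a \<in> side e {i. c$i = 0}" using S0 ac by (auto simp: side_def)
    qed
    show "side e {i. c$i = 0} \<subseteq> argmx p e c"
    proof
      fix a assume a: "a \<in> side e {i. c$i = 0}"
      then have "(\<Sum>i\<in>UNIV. c$i * (p ^ a i - 1)) = 0" using S0 by (auto simp: side_def)
      then have "c \<bullet> pt p a = (\<Sum>j\<in>UNIV. c$j)" unfolding val_split by simp
      moreover have "c \<bullet> pt p b \<le> (\<Sum>j\<in>UNIV. c$j)" for b
        using S[of b] unfolding val_split by simp
      ultimately show "a \<in> argmx p e c" using a unfolding argmx_def side_def by auto
    qed
  qed
qed


lemma argmx_sep:
  fixes p lam :: real and w m :: "'d::finite \<Rightarrow> real"
  assumes t0: "t0 \<in> comps e"
    and mn: "\<And>i t. m i \<le> w i * p ^ t - lam * real t"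
    and m0: "\<And>i. w i * p ^ (t0 i) - lam * real (t0 i) = m i"
  shows "argmx p e (\<chi> i. - w i) = {a \<in> comps e. \<forall>i. w i * p ^ a i - lam * real (a i) = m i}"
proof -
  define H where "H a = (\<Sum>i\<in>UNIV. w i * p ^ a i - lam * real (a i))" for a :: "'d \<Rightarrow> nat"
  have V: "(\<chi> i. - w i) \<bullet> pt p a = - H a - lam * real e" if "a \<in> comps e" for a
  proof -
    have "(\<Sum>i\<in>UNIV. real (a i)) = real e" using that by (simp add: comps_def flip: of_nat_sum)
    then have "H a = (\<Sum>i\<in>UNIV. w i * p ^ a i) - lam * real e"
      unfolding H_def by (simp add: sum_subtractf flip: sum_distrib_left)
    then show ?thesis unfolding val by (simp add: sum_negf)
  qed
  have Hge: "(\<Sum>i\<in>UNIV. m i) \<le> H a" for a unfolding H_def by (rule sum_mono) (rule mn)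
  have Ht0: "H t0 = (\<Sum>i\<in>UNIV. m i)" unfolding H_def using m0 by simp
  show ?thesis
  proof
    show "argmx p e (\<chi> i. - w i) \<subseteq> {a \<in> comps e. \<forall>i. w i * p ^ a i - lam * real (a i) = m i}"
    proof
      fix a assume a: "a \<in> argmx p e (\<chi> i. - w i)"
      then have ac: "a \<in> comps e" by (simp add: argmx_def)
      have "(\<chi> i. - w i) \<bullet> pt p t0 \<le> (\<chi> i. - w i) \<bullet> pt p a" using a t0 by (simp add: argmx_def)
      then have "H a \<le> H t0" using V[OF ac] V[OF t0] by simp
      then have "(\<Sum>i\<in>UNIV. (w i * p ^ a i - lam * real (a i)) - m i) \<le> 0"
        using Ht0 unfolding H_def by (simp add: sum_subtractf)
      moreover have "\<forall>i\<in>UNIV. (w i * p ^ a i - lam * real (a i)) - m i \<ge> 0" using mn by simp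
      ultimately have "\<forall>i\<in>UNIV. (w i * p ^ a i - lam * real (a i)) - m i = 0"
        using sum_nonneg_eq_0_iff[of UNIV "\<lambda>i. (w i * p ^ a i - lam * real (a i)) - m i"]
        by (simp add: order_antisym sum_nonneg)
      then show "a \<in> {a \<in> comps e. \<forall>i. w i * p ^ a i - lam * real (a i) = m i}" using ac by simp
    qed
    show "{a \<in> comps e. \<forall>i. w i * p ^ a i - lam * real (a i) = m i} \<subseteq> argmx p e (\<chi> i. - w i)"
    proof
      fix a assume a: "a \<in> {a \<in> comps e. \<forall>i. w i * p ^ a i - lam * real (a i) = m i}"
      then have ac: "a \<in> comps e" and eq: "H a = (\<Sum>i\<in>UNIV. m i)" unfolding H_def by auto
      have "(\<chi> i. - w i) \<bullet> pt p b \<le> (\<chi> i. - w i) \<bullet> pt p a" if "b \<in> comps e" for b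
        using V[OF that] V[OF ac] eq Hge[of b] by simp
      then show "a \<in> argmx p e (\<chi> i. - w i)" using ac by (simp add: argmx_def)
    qed
  qed
qed

lemma dl1_sum: "sum (dl 1 i) UNIV = 1"
  using dl_comps[of 1 i] by (simp add: comps_def)

lemma exch:
  fixes p :: real
  assumes p: "p > 1" and a: "a \<in> argmx p e c" and ij: "i \<noteq> j" and aj: "a j \<ge> 1"
  shows "- c$j * (p - 1) * p ^ (a j - 1) \<le> - c$i * (p - 1) * p ^ (a i)"
proof -
  define a' where "a' k = (if k = i then Suc (a i) else if k = j then a j - 1 else a k)" for k
  have ac: "a \<in> comps e" using a by (simp add: argmx_def)
  have pw: "a' k + dl 1 j k = a k + dl 1 i k" for k using ij aj by (auto simp: a'_def dl_def)
  have "sum a' UNIV + 1 = sum a UNIV + 1"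
  proof -
    have "sum a' UNIV + sum (dl 1 j) UNIV = sum a UNIV + sum (dl 1 i) UNIV"
      using pw by (simp add: sum.distrib[symmetric])
    then show ?thesis using dl1_sum[of i] dl1_sum[of j] by simp
  qed
  then have a'c: "a' \<in> comps e" using ac by (simp add: comps_def)
  define X where "X = c$i * (p ^ Suc (a i) - p ^ a i)"
  define Y where "Y = c$j * (p ^ (a j - 1) - p ^ a j)"
  have pw2: "c$k * p ^ a' k = c$k * p ^ a k + ((if k = i then X else 0) + (if k = j then Y else 0))" for k
    using ij by (auto simp: a'_def X_def Y_def algebra_simps)
  have "c \<bullet> pt p a' = c \<bullet> pt p a + X + Y"
    unfolding val by (simp add: pw2 sum.distrib)
  moreover have "c \<bullet> pt p a' \<le> c \<bullet> pt p a" using a a'c by (simp add: argmx_def)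
  ultimately have XY: "X + Y \<le> 0" by simp
  obtain m where m: "a j = Suc m" using aj by (cases "a j") auto
  have "p ^ a j = p * p ^ (a j - 1)" using m by simp
  then have "Y = - c$j * (p - 1) * p ^ (a j - 1)" unfolding Y_def by (simp add: algebra_simps)
  moreover have "X = c$i * (p - 1) * p ^ a i" unfolding X_def by (simp add: algebra_simps)
  ultimately show ?thesis using XY by simp
qed

lemma argmx_neg:
  fixes p :: real
  assumes p: "p > 1" and neg: "\<And>i. c$i < 0"
  shows "\<exists>b J. argmx p e (c::real^'d::finite) = box e b J"
proof -
  define w where "w i = - c$i" for i
  have w0: "w i > 0" for i using neg[of i] by (simp add: w_def)
  have cw: "c = (\<chi> i. - w i)" by (simp add: w_def vec_eq_iff)
  obtain as where as: "as \<in> argmx p e c" using argmx_ne by blast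
  have asc: "as \<in> comps e" using as by (simp add: argmx_def)
  define hi where "hi i = w i * (p - 1) * p ^ (as i)" for i
  define lo where "lo i = w i * (p - 1) * p ^ (as i - 1)" for i
  define lam where "lam = Min (range hi)"
  have lam_le: "lam \<le> hi i" for i unfolding lam_def by simp
  have "lam \<in> range hi" unfolding lam_def by (rule Min_in) auto
  then obtain i0 where i0: "lam = hi i0" by auto
  have lo_lt: "lo i < hi i" if "as i \<ge> 1" for i
  proof -
    have "p ^ (as i - 1) < p ^ as i" using p that by (intro power_strict_increasing) auto
    moreover have "w i * (p - 1) > 0" using w0 p by simp
    ultimately show ?thesis unfolding lo_def hi_def
      using mult_strict_left_mono[of "p^(as i - 1)" "p^as i" "w i * (p-1)"] by simp
  qed
  have lo_le: "lo i \<le> lam" if "as i \<ge> 1" for i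
  proof (cases "i0 = i")
    case True then show ?thesis using lo_lt[OF that] i0 by simp
  next
    case False
    have "- c$i * (p - 1) * p ^ (as i - 1) \<le> - c$i0 * (p - 1) * p ^ (as i0)"
      by (rule exch[OF p as False that])
    then show ?thesis using i0 by (simp add: lo_def hi_def w_def)
  qed
  have H1: "w i * p ^ as i - lam * real (as i) \<le> w i * p ^ t - lam * real t"
    and H2: "w i * p ^ t - lam * real t = w i * p ^ as i - lam * real (as i) \<longleftrightarrow>
         t = as i \<or> (t = Suc (as i) \<and> lam = hi i) \<or> (as i \<ge> 1 \<and> t = as i - 1 \<and> lam = lo i)" for i t
  proof -
    have c1: "lam \<le> w i * (p - 1) * p ^ as i" using lam_le[of i] by (simp add: hi_def)
    have c2: "as i = 0 \<or> w i * (p - 1) * p ^ (as i - 1) \<le> lam"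
    proof (cases "as i = 0")
      case False then show ?thesis using lo_le[of i] by (simp add: lo_def)
    qed simp
    show "w i * p ^ as i - lam * real (as i) \<le> w i * p ^ t - lam * real t"
      by (rule h1(1)[OF p w0 c1 c2])
    show "w i * p ^ t - lam * real t = w i * p ^ as i - lam * real (as i) \<longleftrightarrow>
         t = as i \<or> (t = Suc (as i) \<and> lam = hi i) \<or> (as i \<ge> 1 \<and> t = as i - 1 \<and> lam = lo i)"
      using h1(2)[OF p w0 c1 c2] by (simp add: hi_def lo_def)
  qed
  have S: "argmx p e c = {a \<in> comps e. \<forall>i. w i * p ^ a i - lam * real (a i) = w i * p ^ as i - lam * real (as i)}"
    unfolding cw by (rule argmx_sep[OF asc]) (use H1 in auto)
  define J where "J = {i. lam = hi i \<or> (as i \<ge> 1 \<and> lam = lo i)}"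
  define b where "b i = (if as i \<ge> 1 \<and> lam = lo i then as i - 1 else as i)" for i
  have key: "(w i * p ^ t - lam * real t = w i * p ^ as i - lam * real (as i)) \<longleftrightarrow>
      (t = b i \<or> (i \<in> J \<and> t = Suc (b i)))" for i t
  proof (cases "as i \<ge> 1 \<and> lam = lo i")
    case True
    then have "lam \<noteq> hi i" using lo_lt[of i] by auto
    then show ?thesis unfolding H2 using True by (auto simp: J_def b_def)
  next
    case False
    then show ?thesis unfolding H2 using False by (auto simp: J_def b_def)
  qed
  have "argmx p e c = box e b J" unfolding S box_def using key by simp
  then show ?thesis by blast
qed


lemma box_argmx:
  fixes p :: real
  assumes p: "p > 1" and a0: "a0 \<in> box e b J"
  shows "\<exists>c. argmx p e c = box e b (J::'d::finite set)"
proof -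
  define \<theta> where "\<theta> i = (if i \<in> J then 1 else (p + 1) / 2)" for i
  define w where "w i = \<theta> i / p ^ (b i)" for i
  define lam where "lam = p - 1"
  have pb: "p ^ n > 0" for n using p by simp
  have th1: "\<theta> i \<ge> 1" and thp: "\<theta> i < p" for i using p by (auto simp: \<theta>_def)
  have w0: "w i > 0" for i using th1[of i] pb by (simp add: w_def)
  have hiq: "w i * (p - 1) * p ^ (b i) = \<theta> i * (p - 1)" for i
  proof -
    have "w i * (p - 1) * p ^ (b i) = (\<theta> i / p ^ b i * p ^ b i) * (p - 1)" by (simp add: w_def)
    also have "\<dots> = \<theta> i * (p - 1)" using pb[of "b i"] p by simp
    finally show ?thesis .
  qed
  have loq: "w i * (p - 1) * p ^ (b i - 1) = \<theta> i * (p - 1) / p" if "b i \<ge> 1" for i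
  proof -
    have "p ^ b i = p * p ^ (b i - 1)" using that by (cases "b i") auto
    then show ?thesis using pb[of "b i - 1"] pb[of "b i"] p by (simp add: w_def field_simps)
  qed
  have c1: "lam \<le> w i * (p - 1) * p ^ (b i)" for i using th1[of i] p by (simp add: hiq lam_def)
  have c2: "b i = 0 \<or> w i * (p - 1) * p ^ (b i - 1) \<le> lam" for i
  proof (cases "b i = 0")
    case False
    have "\<theta> i * (p - 1) \<le> p * (p - 1)" using thp[of i] p by simp
    then have "\<theta> i * (p - 1) / p \<le> p - 1" using p by (simp add: divide_le_eq mult.commute)
    then show ?thesis using False loq[of i] by (simp add: lam_def)
  qed simp
  have key: "(w i * p ^ t - lam * real t = w i * p ^ b i - lam * real (b i)) \<longleftrightarrow>
      (t = b i \<or> (i \<in> J \<and> t = Suc (b i)))" for i t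
  proof -
    have e1: "lam = w i * (p - 1) * p ^ b i \<longleftrightarrow> i \<in> J"
      using p by (auto simp: hiq lam_def \<theta>_def)
    have e2: "\<not> (b i \<ge> 1 \<and> lam = w i * (p - 1) * p ^ (b i - 1))"
    proof
      assume "b i \<ge> 1 \<and> lam = w i * (p - 1) * p ^ (b i - 1)"
      then have "lam = w i * (p - 1) * p ^ (b i - 1)" and bi: "b i \<ge> 1" by auto
      then have "lam = \<theta> i * (p - 1) / p" using loq[OF bi] by simp
      then have "p - 1 = \<theta> i * (p - 1) / p" by (simp add: lam_def)
      then have "p * (p - 1) = \<theta> i * (p - 1)" using p by (simp add: field_simps)
      then have "\<theta> i = p" using p by simp
      then show False using thp[of i] by simp
    qed
    show ?thesis using h1(2)[OF p w0 c1 c2, of i t] e1 e2 by auto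
  qed
  have a0c: "a0 \<in> comps e" using a0 by (simp add: box_def)
  have m0: "w i * p ^ (a0 i) - lam * real (a0 i) = w i * p ^ b i - lam * real (b i)" for i
    using key[of i "a0 i"] a0 by (auto simp: box_def)
  have "argmx p e (\<chi> i. - w i) = {a \<in> comps e. \<forall>i. w i * p ^ a i - lam * real (a i) = w i * p ^ b i - lam * real (b i)}"
    by (rule argmx_sep[OF a0c _ m0]) (rule h1(1)[OF p w0 c1 c2])
  also have "\<dots> = box e b J" unfolding box_def using key by simp
  finally show ?thesis by blast
qed

lemma top_argmx:
  fixes p :: real
  assumes p: "p > 1" and e: "e \<ge> 1" and I: "I \<noteq> {}"
  shows "argmx p e (\<chi> i. if i \<in> I then 1 else 0) = dl e ` (I::'d::finite set)"
proof -
  let ?c = "(\<chi> i. if i \<in> I then 1 else 0) :: real^'d"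
  have M: "1 = Max (range (\<lambda>i. ?c$i))"
  proof (rule sym, rule Max_eqI)
    show "finite (range (\<lambda>i. ?c$i))" by simp
    show "y \<le> 1" if "y \<in> range (\<lambda>i. ?c$i)" for y using that by auto
    obtain i where "i \<in> I" using I by blast
    then show "1 \<in> range (\<lambda>i. ?c$i)" by (auto intro!: image_eqI[of _ _ i])
  qed
  have "{i. ?c$i = 1} = I" by auto
  then show ?thesis using argmx_pos[OF p e M] by simp
qed

lemma side_argmx:
  fixes p :: real
  assumes p: "p > 1" and I: "I \<noteq> {}"
  shows "argmx p e (\<chi> i. if i \<in> I then 0 else -1) = side e (I::'d::finite set)"
proof -
  let ?c = "(\<chi> i. if i \<in> I then 0 else -1) :: real^'d"
  have M: "0 = Max (range (\<lambda>i. ?c$i))"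
  proof (rule sym, rule Max_eqI)
    show "finite (range (\<lambda>i. ?c$i))" by simp
    show "y \<le> 0" if "y \<in> range (\<lambda>i. ?c$i)" for y using that by auto
    obtain i where "i \<in> I" using I by blast
    then show "0 \<in> range (\<lambda>i. ?c$i)" by (auto intro!: image_eqI[of _ _ i])
  qed
  have "{i. ?c$i = 0} = I" by auto
  then show ?thesis using argmx_zero[OF p M] by simp
qed

lemma argmx_class:
  fixes p :: real
  assumes p: "p > 1" and e: "e \<ge> 1"
  shows "M \<in> range (argmx p e :: real^'d \<Rightarrow> _) \<longleftrightarrow> (\<exists>I. I \<noteq> {} \<and> M = dl e ` I) \<or> (\<exists>I. I \<noteq> {} \<and> M = side e I)
     \<or> (\<exists>b J. M = box e b J \<and> M \<noteq> ({}::('d::finite \<Rightarrow> nat) set))"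
proof
  assume "M \<in> range (argmx p e :: real^'d \<Rightarrow> _)"
  then obtain c :: "real^'d" where c: "M = argmx p e c" by auto
  define \<mu> where "\<mu> = Max (range (\<lambda>i. c$i))"
  have "\<mu> \<in> range (\<lambda>i. c$i)" unfolding \<mu>_def by (rule Max_in) auto
  then obtain i0 where i0: "c$i0 = \<mu>" by auto
  have cle: "c$i \<le> \<mu>" for i unfolding \<mu>_def by simp
  consider "\<mu> > 0" | "\<mu> = 0" | "\<mu> < 0" by linarith
  then show "(\<exists>I. I \<noteq> {} \<and> M = dl e ` I) \<or> (\<exists>I. I \<noteq> {} \<and> M = side e I)
     \<or> (\<exists>b J. M = box e b J \<and> M \<noteq> ({}::('d::finite \<Rightarrow> nat) set))"
  proof cases
    case 1
    then have "M = dl e ` {i. c$i = \<mu>}" using argmx_pos[OF p e \<mu>_def] c by simp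
    moreover have "{i. c$i = \<mu>} \<noteq> {}" using i0 by auto
    ultimately show ?thesis by (intro disjI1 exI[of _ "{i. c$i = \<mu>}"]) simp
  next
    case 2
    then have "M = side e {i. c$i = 0}" using argmx_zero[OF p] \<mu>_def c by simp
    moreover have "{i. c$i = 0} \<noteq> {}" using i0 2 by auto
    ultimately show ?thesis by (intro disjI2 disjI1 exI[of _ "{i. c$i = 0}"]) simp
  next
    case 3
    then have "\<And>i. c$i < 0" using cle le_less_trans by blast
    then obtain b J where "M = box e b J" using argmx_neg[OF p] c by blast
    moreover have "M \<noteq> {}" using c argmx_ne by blast
    ultimately show ?thesis by (intro disjI2 exI[of _ b] exI[of _ J]) simp
  qed
next
  assume "(\<exists>I. I \<noteq> {} \<and> M = dl e ` I) \<or> (\<exists>I. I \<noteq> {} \<and> M = side e I)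
     \<or> (\<exists>b J. M = box e b J \<and> M \<noteq> ({}::('d::finite \<Rightarrow> nat) set))"
  then show "M \<in> range (argmx p e :: real^'d \<Rightarrow> _)"
  proof (elim disjE exE conjE)
    fix I assume "I \<noteq> {}" "M = dl e ` I"
    then show ?thesis using top_argmx[OF p e, of I] by (metis rangeI)
  next
    fix I assume "I \<noteq> {}" "M = side e I"
    then show ?thesis using side_argmx[OF p, of I e] by (metis rangeI)
  next
    fix b J assume bj: "M = box e b J" "M \<noteq> {}"
    then obtain a0 where "a0 \<in> box e b J" by blast
    then obtain c :: "real^'d" where "argmx p e c = box e b J" using box_argmx[OF p] by blast
    then show ?thesis using bj by (metis rangeI)
  qed
qed


definition zf :: "'n \<Rightarrow> real^'n \<Rightarrow> real^'n" where
  "zf j v = (\<chi> k. if k = j then 0 else v$k)"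

lemma linear_zf: "linear (zf j)"
  by (auto simp: linear_iff zf_def vec_eq_iff)

lemma aff_dim_D:
  fixes A :: "(real^'n::finite) set"
  assumes x0: "x0 \<in> A"
  shows "aff_dim A = int (dim ((\<lambda>x. x - x0) ` A))"
proof -
  have "aff_dim A = int (dim ((+) (- x0) ` A))" by (rule aff_dim_eq_dim) (simp add: hull_inc x0)
  moreover have "(+) (- x0) ` A = (\<lambda>x. x - x0) ` A" by (rule image_cong) auto
  ultimately show ?thesis by simp
qed

lemma aff_lower:
  fixes A :: "(real^'n::finite) set" and f :: "real^'n \<Rightarrow> real^'n"
  assumes x0: "x0 \<in> A" and lf: "linear f"
    and K: "\<And>i. i \<in> K \<Longrightarrow> axis i 1 \<in> span (f ` ((\<lambda>x. x - x0) ` A))"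
  shows "int (card K) \<le> aff_dim A"
proof -
  let ?D = "(\<lambda>x. x - x0) ` A"
  have sub: "(\<lambda>i. axis i (1::real)) ` K \<subseteq> span (f ` ?D)" using K by auto
  have ind: "independent ((\<lambda>i. axis i (1::real)) ` K)"
    by (rule independent_mono[OF independent_Basis]) (auto simp: axis_in_Basis_iff)
  have card: "card ((\<lambda>i. axis i (1::real)) ` K) = card K"
    by (rule card_image) (auto simp: inj_on_def axis_eq_axis)
  have "dim ((\<lambda>i. axis i (1::real)) ` K) \<le> dim (span (f ` ?D))" by (rule dim_subset[OF sub])
  also have "\<dots> = dim (f ` ?D)" by (rule dim_span)
  also have "\<dots> \<le> dim ?D" by (rule dim_image_le[OF lf])
  finally have "card K \<le> dim ?D" using ind card by (simp add: dim_eq_card_independent)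
  then show ?thesis using aff_dim_D[OF x0] by simp
qed

lemma aff_upper:
  fixes A :: "(real^'n::finite) set"
  assumes x0: "x0 \<in> A" and V: "\<And>x. x \<in> A \<Longrightarrow> x - x0 \<in> V"
  shows "aff_dim A \<le> int (dim V)"
proof -
  have "dim ((\<lambda>x. x - x0) ` A) \<le> dim V" by (rule dim_subset) (use V in auto)
  then show ?thesis using aff_dim_D[OF x0] by simp
qed

lemma dim_U: "dim {v::real^'n::finite. \<forall>i. i \<notin> J \<longrightarrow> v$i = 0} = card J"
proof -
  have "vec.dim {v::real^'n. \<forall>i. i \<notin> J \<longrightarrow> v$i = 0} = card J" by (rule dim_substandard_cart)
  then show ?thesis by (simp add: dim_vec_eq)
qed

lemma dim_V:
  assumes j0: "j0 \<in> J" and \<beta>: "\<And>i. i \<in> J \<Longrightarrow> \<beta> i \<noteq> 0"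
  shows "dim {v::real^'n::finite. (\<forall>i. i \<notin> J \<longrightarrow> v$i = 0) \<and> (\<Sum>i\<in>J. \<beta> i * v$i) = 0} < card J"
proof -
  let ?U = "{v::real^'n. \<forall>i. i \<notin> J \<longrightarrow> v$i = 0}"
  let ?V = "{v::real^'n. (\<forall>i. i \<notin> J \<longrightarrow> v$i = 0) \<and> (\<Sum>i\<in>J. \<beta> i * v$i) = 0}"
  have sU: "subspace ?U" by (auto simp: subspace_def)
  have sV: "subspace ?V"
    unfolding subspace_def
  proof (intro conjI ballI allI)
    show "0 \<in> ?V" by simp
    fix x y assume x: "x \<in> ?V" and y: "y \<in> ?V"
    have "(\<Sum>i\<in>J. \<beta> i * (x + y)$i) = (\<Sum>i\<in>J. \<beta> i * x$i) + (\<Sum>i\<in>J. \<beta> i * y$i)"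
      by (simp add: distrib_left sum.distrib)
    then show "x + y \<in> ?V" using x y by simp
  next
    fix c :: real and x assume x: "x \<in> ?V"
    have "(\<Sum>i\<in>J. \<beta> i * (c *\<^sub>R x)$i) = c * (\<Sum>i\<in>J. \<beta> i * x$i)"
      by (simp add: sum_distrib_left mult.left_commute)
    then show "c *\<^sub>R x \<in> ?V" using x by simp
  qed
  have ax: "(\<Sum>i\<in>J. \<beta> i * (axis j0 (1::real))$i) = \<beta> j0"
  proof -
    have "(\<Sum>i\<in>J. \<beta> i * (axis j0 (1::real))$i) = (\<Sum>i\<in>J. if i = j0 then \<beta> j0 else 0)"
      by (rule sum.cong) (auto simp: axis_def)
    then show ?thesis using j0 by simp
  qed
  have "axis j0 1 \<in> ?U" using j0 by (auto simp: axis_def)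
  moreover have "axis j0 1 \<notin> ?V" using ax \<beta>[OF j0] by simp
  ultimately have "?V \<subset> ?U" by blast
  moreover have "span ?V = ?V" by (rule span_eq_iff[THEN iffD2, OF sV])
  moreover have "span ?U = ?U" by (rule span_eq_iff[THEN iffD2, OF sU])
  ultimately have "span ?V \<subset> span ?U" by (simp only:)
  then have "dim ?V < dim ?U" by (rule dim_psubset)
  then show ?thesis using dim_U[of J] by simp
qed


lemma pt_comp: "pt p a $ k = p ^ a k" by (simp add: pt_def)
lemma dl_comp: "dl e i k = (if k = i then e else 0)" by (simp add: dl_def)

lemma in_span_lin:
  fixes f :: "real^'n \<Rightarrow> real^'n"
  assumes lf: "linear f" and x: "x \<in> A" and y: "y \<in> A"
  shows "f (x - y) \<in> span (f ` ((\<lambda>z. z - x0) ` A))"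
proof -
  have "f (x - y) = f (x - x0) - f (y - x0)" using lf by (simp add: linear_diff[symmetric])
  moreover have "f (x - x0) \<in> span (f ` ((\<lambda>z. z - x0) ` A))" using x by (intro span_base) auto
  moreover have "f (y - x0) \<in> span (f ` ((\<lambda>z. z - x0) ` A))" using y by (intro span_base) auto
  ultimately show ?thesis by (simp add: span_diff)
qed

lemma axis_from:
  fixes v :: "real^'n"
  assumes "v \<in> span S" "v = c *\<^sub>R axis i 1" "c \<noteq> 0"
  shows "axis i 1 \<in> span S"
proof -
  have "axis i 1 = (1 / c) *\<^sub>R v" using assms(2,3) by simp
  then show ?thesis using assms(1) by (simp add: span_scale)
qed

lemma top_dim:
  fixes p :: real
  assumes p: "p > 1" and e: "e \<ge> 1" and I: "I \<noteq> {}"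
  shows "aff_dim (pt p ` dl e ` (I::'d::finite set)) = int (card I) - 1"
proof -
  obtain j0 where j0: "j0 \<in> I" using I by blast
  let ?A = "pt p ` dl e ` I"
  let ?x0 = "pt p (dl e j0)"
  have pe: "p ^ e - 1 > 0" using one_less_power[OF p, of e] e by simp
  have comp: "(pt p (dl e i) - pt p (dl e j)) $ k = (if k = i then p ^ e - 1 else 0) - (if k = j then p ^ e - 1 else 0)" for i j k
    by (simp add: pt_comp dl_comp)
  have x0A: "?x0 \<in> ?A" using j0 by blast
  let ?V = "{v::real^'d. (\<forall>i. i \<notin> I \<longrightarrow> v$i = 0) \<and> (\<Sum>i\<in>I. 1 * v$i) = 0}"
  have inV: "x - ?x0 \<in> ?V" if "x \<in> ?A" for x
  proof -
    obtain i where i: "i \<in> I" "x = pt p (dl e i)" using \<open>x \<in> ?A\<close> by blast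
    have "(\<Sum>k\<in>I. (x - ?x0)$k) = (\<Sum>k\<in>I. (if k = i then p ^ e - 1 else 0)) - (\<Sum>k\<in>I. (if k = j0 then p ^ e - 1 else 0))"
      unfolding i(2) comp by (simp add: sum_subtractf)
    also have "\<dots> = 0" using i(1) j0 by simp
    finally have "(\<Sum>k\<in>I. 1 * (x - ?x0)$k) = 0" by simp
    moreover have "\<forall>k. k \<notin> I \<longrightarrow> (x - ?x0)$k = 0"
    proof (intro allI impI)
      fix k assume "k \<notin> I"
      then have "k \<noteq> i" "k \<noteq> j0" using i j0 by auto
      then show "(x - ?x0)$k = 0" unfolding i(2) comp by simp
    qed
    ultimately show ?thesis by simp
  qed
  have up: "aff_dim ?A \<le> int (dim ?V)" by (rule aff_upper[OF x0A inV])
  have dV: "dim ?V < card I" by (rule dim_V[OF j0]) simp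
  have lo: "int (card (I - {j0})) \<le> aff_dim ?A"
  proof (rule aff_lower[OF x0A linear_zf[of j0]])
    fix i assume i: "i \<in> I - {j0}"
    have "zf j0 (pt p (dl e i) - ?x0) \<in> span (zf j0 ` ((\<lambda>x. x - ?x0) ` ?A))"
      by (rule in_span_lin[OF linear_zf]) (use i x0A in auto)
    moreover have "zf j0 (pt p (dl e i) - ?x0) = (p ^ e - 1) *\<^sub>R axis i 1"
      using i unfolding vec_eq_iff by (auto simp: zf_def pt_comp dl_comp axis_def)
    ultimately show "axis i 1 \<in> span (zf j0 ` ((\<lambda>x. x - ?x0) ` ?A))"
      using pe by (intro axis_from) auto
  qed
  have "card (I - {j0}) = card I - 1" using j0 by simp
  moreover have "card I \<ge> 1" using I by (simp add: Suc_leI card_gt_0_iff)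
  ultimately show ?thesis using up dV lo by linarith
qed




lemma in_span_id:
  fixes x :: "real^'n"
  assumes "x \<in> A" "y \<in> A"
  shows "x - y \<in> span (id ` ((\<lambda>z. z - x0) ` A))"
  using in_span_lin[OF linear_id assms, of x0] by simp

lemma side_dim:
  fixes p :: real
  assumes p: "p > 1" and e: "e \<ge> 2" and I: "card I \<ge> 2"
  shows "aff_dim (pt p ` side e (I::'d::finite set)) = int (card I)"
proof -
  have Ine: "I \<noteq> {}" using I by auto
  then obtain i0 where i0: "i0 \<in> I" by blast
  have "card (I - {i0}) = card I - 1" using i0 by simp
  then have "card (I - {i0}) \<ge> 1" using I by simp
  then have "I - {i0} \<noteq> {}" by (cases "I - {i0} = {}") auto
  then obtain i1 where i1: "i1 \<in> I - {i0}" by blast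
  have ii: "i0 \<in> I" "i1 \<in> I" "i0 \<noteq> i1" using i0 i1 by auto
  let ?A = "pt p ` side e I"
  let ?x0 = "pt p (dl e i0)"
  have dlS: "dl e i \<in> side e I" if "i \<in> I" for i using that dl_comps by (auto simp: side_def dl_def)
  have x0A: "?x0 \<in> ?A" using dlS[OF ii(1)] by blast
  have pe: "p ^ e - 1 > 0" using one_less_power[OF p, of e] e by simp
  have pe1: "p ^ (e - 1) > 1" using one_less_power[OF p, of "e - 1"] e by simp
  have pee: "p ^ e = p * p ^ (e - 1)" using e by (cases e) auto
  let ?U = "{v::real^'d. \<forall>i. i \<notin> I \<longrightarrow> v$i = 0}"
  have inU: "x - ?x0 \<in> ?U" if "x \<in> ?A" for x
  proof -
    obtain a where a: "a \<in> side e I" "x = pt p a" using \<open>x \<in> ?A\<close> by blast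
    show ?thesis
    proof (simp, intro allI impI)
      fix k assume k: "k \<notin> I"
      then have "a k = 0" using a(1) by (auto simp: side_def)
      moreover have "k \<noteq> i0" using k ii by auto
      ultimately show "x $ k = ?x0 $ k" using a(2) by (simp add: pt_comp dl_comp)
    qed
  qed
  have up: "aff_dim ?A \<le> int (card I)" using aff_upper[OF x0A inU] dim_U[of I] by simp
  let ?S = "span (id ` ((\<lambda>x. x - ?x0) ` ?A))"
  define q where "q k = (if k = i0 then e - 1 else if k = i1 then 1 else 0)" for k
  have "sum q UNIV = (\<Sum>k\<in>UNIV. (if k = i0 then e - 1 else 0) + (if k = i1 then 1 else 0))"
    by (rule sum.cong) (use ii in \<open>auto simp: q_def\<close>)
  also have "\<dots> = e" using e by (simp add: sum.distrib)
  finally have qS: "q \<in> side e I" using ii by (auto simp: side_def comps_def q_def)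
  have v1: "pt p (dl e i1) - ?x0 \<in> ?S"
    by (rule in_span_id) (use x0A dlS[OF ii(2)] in auto)
  have v2: "pt p q - ?x0 \<in> ?S"
    by (rule in_span_id) (use x0A qS in auto)
  define \<kappa> where "\<kappa> = (p ^ e - 1) * (p ^ (e - 1) - p ^ e + p - 1)"
  have "p ^ (e - 1) - p ^ e + p - 1 = - ((p - 1) * (p ^ (e - 1) - 1))" using pee by (simp add: algebra_simps)
  moreover have "(p - 1) * (p ^ (e - 1) - 1) > 0" using p pe1 by simp
  ultimately have k0: "\<kappa> \<noteq> 0" using pe p pe1 unfolding \<kappa>_def by simp
  have "(p ^ e - 1) *\<^sub>R (pt p q - ?x0) - (p - 1) *\<^sub>R (pt p (dl e i1) - ?x0) = \<kappa> *\<^sub>R axis i0 1"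
    unfolding vec_eq_iff
  proof
    fix k
    show "((p ^ e - 1) *\<^sub>R (pt p q - ?x0) - (p - 1) *\<^sub>R (pt p (dl e i1) - ?x0)) $ k = (\<kappa> *\<^sub>R axis i0 1) $ k"
    proof (cases "k = i0")
      case True then show ?thesis using ii by (simp add: pt_comp dl_comp q_def axis_def \<kappa>_def algebra_simps)
    next
      case False
      show ?thesis
      proof (cases "k = i1")
        case True then show ?thesis using ii False by (simp add: pt_comp dl_comp q_def axis_def algebra_simps)
      next
        case False2: False
        then show ?thesis using False by (simp add: pt_comp dl_comp q_def axis_def)
      qed
    qed
  qed
  moreover have "(p ^ e - 1) *\<^sub>R (pt p q - ?x0) - (p - 1) *\<^sub>R (pt p (dl e i1) - ?x0) \<in> ?S"
    by (rule span_diff[OF span_scale[OF v2] span_scale[OF v1]])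
  ultimately have ax0: "axis i0 1 \<in> ?S" using k0 by (intro axis_from) auto
  have neg1: "(1 - p ^ e) / (p ^ e - 1) = -1"
  proof -
    have "1 - p ^ e = - (p ^ e - 1)" by simp
    then show ?thesis using pe by (simp only: divide_minus_left) simp
  qed
  have lo: "int (card I) \<le> aff_dim ?A"
  proof (rule aff_lower[OF x0A linear_id])
    fix i assume i: "i \<in> I"
    have w: "pt p (dl e i) - ?x0 \<in> ?S"
      by (rule in_span_id) (use x0A dlS[OF i] in auto)
    have "axis i 1 = axis i0 1 + (1 / (p ^ e - 1)) *\<^sub>R (pt p (dl e i) - ?x0)"
      unfolding vec_eq_iff
    proof
      fix k
      show "axis i 1 $ k = (axis i0 1 + (1 / (p ^ e - 1)) *\<^sub>R (pt p (dl e i) - ?x0)) $ k"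
        using pe neg1 by (cases "k = i"; cases "k = i0") (simp_all add: pt_comp dl_comp axis_def)
    qed
    moreover have "axis i0 1 + (1 / (p ^ e - 1)) *\<^sub>R (pt p (dl e i) - ?x0) \<in> ?S"
      by (rule span_add[OF ax0 span_scale[OF w]])
    ultimately show "axis i 1 \<in> span (id ` ((\<lambda>x. x - ?x0) ` ?A))" by simp
  qed
  show ?thesis using up lo by linarith
qed


lemma ind_sum: "(\<Sum>k\<in>(UNIV::'d::finite set). (if k \<in> T then 1 else 0::nat)) = card T"
  using sum.inter_restrict[of "UNIV::'d set" "\<lambda>_. 1::nat" T] by simp

definition bp :: "('d \<Rightarrow> nat) \<Rightarrow> 'd set \<Rightarrow> 'd \<Rightarrow> nat" where
  "bp b T = (\<lambda>k. b k + (if k \<in> T then 1 else 0))"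

lemma bp_box:
  assumes "T \<subseteq> J" "card T = e - sum b UNIV" "sum b UNIV \<le> e"
  shows "bp b T \<in> box e b (J::'d::finite set)"
proof -
  have "sum (bp b T) UNIV = sum b UNIV + card T"
    unfolding bp_def by (simp add: sum.distrib ind_sum)
  then have "bp b T \<in> comps e" using assms by (simp add: comps_def)
  moreover have "\<forall>i. bp b T i = b i \<or> (i \<in> J \<and> bp b T i = Suc (b i))"
    using assms(1) by (auto simp: bp_def)
  ultimately show ?thesis by (simp add: box_def)
qed

lemma boxsum:
  fixes p :: real
  assumes p: "p > 1" and a: "a \<in> box e b (J::'d::finite set)"
  shows "(\<Sum>k\<in>J. p ^ a k / p ^ b k) = real (card J) + (p - 1) * (real e - real (sum b UNIV))"
proof -
  have ac: "sum a UNIV = e" and ab: "\<And>i. a i = b i \<or> (i \<in> J \<and> a i = Suc (b i))"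
    using a by (auto simp: box_def comps_def)
  have pb: "p ^ n \<noteq> 0" for n using p by simp
  have each: "p ^ a k / p ^ b k = 1 + (p - 1) * (real (a k) - real (b k))" for k
  proof (cases "a k = b k")
    case True then show ?thesis using pb[of "b k"] by simp
  next
    case False
    then have "a k = Suc (b k)" using ab[of k] by auto
    then show ?thesis using pb[of "b k"] by simp
  qed
  have "(\<Sum>k\<in>J. real (a k) - real (b k)) = (\<Sum>k\<in>UNIV. real (a k) - real (b k))"
  proof (rule sum.mono_neutral_left)
    show "\<forall>i\<in>UNIV - J. real (a i) - real (b i) = 0" using ab by auto
  qed auto
  also have "\<dots> = real e - real (sum b UNIV)"
    using ac by (simp add: sum_subtractf flip: of_nat_sum)
  finally have d: "(\<Sum>k\<in>J. real (a k) - real (b k)) = real e - real (sum b UNIV)" .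
  have "(\<Sum>k\<in>J. p ^ a k / p ^ b k) = (\<Sum>k\<in>J. 1 + (p - 1) * (real (a k) - real (b k)))"
    using each by simp
  also have "\<dots> = real (card J) + (p - 1) * (\<Sum>k\<in>J. real (a k) - real (b k))"
    by (simp add: sum.distrib sum_distrib_left)
  finally show ?thesis using d by simp
qed

lemma box_dim:
  fixes p :: real
  assumes p: "p > 1" and r1: "sum b UNIV < e" and r2: "e < sum b UNIV + card J"
  shows "aff_dim (pt p ` box e b (J::'d::finite set)) = int (card J) - 1"
proof -
  define r where "r = e - sum b UNIV"
  have r1': "r \<ge> 1" and r2': "r < card J" using r1 r2 by (auto simp: r_def)
  have Jne: "J \<noteq> {}" using r2' by auto
  then obtain j0 where j0: "j0 \<in> J" by blast
  obtain T where T: "T \<subseteq> J" "card T = r" using obtain_subset_with_card_n[of r J] r2' by auto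
  let ?A = "pt p ` box e b J"
  define a0 where "a0 = bp b T"
  have a0b: "a0 \<in> box e b J" unfolding a0_def by (rule bp_box) (use T r1 in \<open>auto simp: r_def\<close>)
  let ?x0 = "pt p a0"
  have x0A: "?x0 \<in> ?A" using a0b by blast
  have pb: "p ^ n > 0" for n using p by simp
  let ?V = "{v::real^'d. (\<forall>i. i \<notin> J \<longrightarrow> v$i = 0) \<and> (\<Sum>i\<in>J. (1 / p ^ b i) * v$i) = 0}"
  have inV: "x - ?x0 \<in> ?V" if "x \<in> ?A" for x
  proof -
    obtain a where a: "a \<in> box e b J" "x = pt p a" using \<open>x \<in> ?A\<close> by blast
    have "(\<Sum>i\<in>J. (1 / p ^ b i) * (x - ?x0)$i) = (\<Sum>i\<in>J. p ^ a i / p ^ b i) - (\<Sum>i\<in>J. p ^ a0 i / p ^ b i)"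
      unfolding a(2) by (simp add: pt_comp sum_subtractf right_diff_distrib)
    also have "\<dots> = 0" using boxsum[OF p a(1)] boxsum[OF p a0b] by simp
    finally have s: "(\<Sum>i\<in>J. (1 / p ^ b i) * (x - ?x0)$i) = 0" .
    have "\<forall>i. i \<notin> J \<longrightarrow> (x - ?x0)$i = 0"
    proof (intro allI impI)
      fix i assume "i \<notin> J"
      then have "a i = b i" "a0 i = b i" using a(1) a0b by (auto simp: box_def)
      then show "(x - ?x0)$i = 0" using a(2) by (simp add: pt_comp)
    qed
    then show ?thesis using s by simp
  qed
  have up: "aff_dim ?A \<le> int (dim ?V)" by (rule aff_upper[OF x0A inV])
  have dV: "dim ?V < card J" by (rule dim_V[OF j0]) (use pb p in simp)
  have lo: "int (card (J - {j0})) \<le> aff_dim ?A"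
  proof (rule aff_lower[OF x0A linear_zf[of j0]])
    fix i assume i: "i \<in> J - {j0}"
    have "card (J - {i, j0}) = card J - 2" using i j0 by (simp add: card_Diff_subset)
    then have "r - 1 \<le> card (J - {i, j0})" using r2' by simp
    then obtain T0 where T0: "T0 \<subseteq> J - {i, j0}" "card T0 = r - 1" "finite T0"
      using obtain_subset_with_card_n by blast
    have nT: "i \<notin> T0" "j0 \<notin> T0" using T0(1) by auto
    have c1: "card (insert i T0) = r" using T0(2,3) nT(1) r1' by simp
    have c2: "card (insert j0 T0) = r" using T0(2,3) nT(2) r1' by simp
    have b1: "bp b (insert i T0) \<in> box e b J"
      by (rule bp_box) (use T0 i c1 r1 in \<open>auto simp: r_def\<close>)
    have b2: "bp b (insert j0 T0) \<in> box e b J"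
      by (rule bp_box) (use T0 j0 c2 r1 in \<open>auto simp: r_def\<close>)
    have "zf j0 (pt p (bp b (insert i T0)) - pt p (bp b (insert j0 T0))) \<in> span (zf j0 ` ((\<lambda>x. x - ?x0) ` ?A))"
      by (rule in_span_lin[OF linear_zf]) (use b1 b2 in auto)
    moreover have "zf j0 (pt p (bp b (insert i T0)) - pt p (bp b (insert j0 T0))) = (p ^ b i * (p - 1)) *\<^sub>R axis i 1"
      unfolding vec_eq_iff
    proof
      fix k
      show "zf j0 (pt p (bp b (insert i T0)) - pt p (bp b (insert j0 T0))) $ k = ((p ^ b i * (p - 1)) *\<^sub>R axis i 1) $ k"
      proof (cases "k = j0")
        case True
        then have "k \<noteq> i" using i by auto
        then show ?thesis using True by (simp add: zf_def axis_def)
      next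
        case False
        show ?thesis
        proof (cases "k = i")
          case True
          then have "i \<notin> T0" using T0 by auto
          then show ?thesis using True False i by (simp add: zf_def axis_def pt_comp bp_def algebra_simps)
        next
          case False2: False
          then show ?thesis using False by (simp add: zf_def axis_def pt_comp bp_def)
        qed
      qed
    qed
    moreover have "p ^ b i * (p - 1) \<noteq> 0" using pb[of "b i"] p by simp
    ultimately show "axis i 1 \<in> span (zf j0 ` ((\<lambda>x. x - ?x0) ` ?A))" by (intro axis_from) auto
  qed
  have "card (J - {j0}) = card J - 1" using j0 by simp
  moreover have "card J \<ge> 1" using r2' by simp
  ultimately show ?thesis using up dV lo by linarith
qed


lemma card_comps: "card (comps m :: ('d::finite \<Rightarrow> nat) set) = (m + CARD('d) - 1) choose m"
proof -
  let ?d = "CARD('d)"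
  obtain g where g: "bij_betw g {..<?d} (UNIV::'d set)"
    using bij_betw_from_nat_into_finite[of "UNIV::'d set"] by auto
  have ginj: "inj_on g {..<?d}" and gsurj: "g ` {..<?d} = UNIV" using g by (auto simp: bij_betw_def)
  define F where "F a = map (\<lambda>i. a (g i)) [0..<?d]" for a :: "'d \<Rightarrow> nat"
  have sumF: "sum_list (F a) = sum a UNIV" for a
  proof -
    have "sum_list (F a) = (\<Sum>i\<in>{..<?d}. a (g i))"
      unfolding F_def by (simp add: sum_set_upt_conv_sum_list_nat[symmetric] atLeast0LessThan)
    also have "\<dots> = sum a UNIV" by (rule sum.reindex_bij_betw[OF g])
    finally show ?thesis .
  qed
  have inj: "inj_on F (comps m)"
  proof (rule inj_onI)
    fix a a' assume "F a = F a'"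
    then have "a (g i) = a' (g i)" if "i < ?d" for i
      using that by (metis F_def diff_zero length_map length_upt nth_map nth_upt plus_nat.add_0)
    moreover have "\<exists>i<?d. x = g i" for x using gsurj by (metis UNIV_I imageE lessThan_iff)
    ultimately show "a = a'" by (metis ext)
  qed
  have img: "F ` comps m = {l. length l = ?d \<and> sum_list l = m}"
  proof
    show "F ` comps m \<subseteq> {l. length l = ?d \<and> sum_list l = m}"
      using sumF by (auto simp: F_def comps_def)
    show "{l. length l = ?d \<and> sum_list l = m} \<subseteq> F ` comps m"
    proof
      fix l :: "nat list" assume l: "l \<in> {l. length l = ?d \<and> sum_list l = m}"
      define a where "a x = l ! (the_inv_into {..<?d} g x)" for x
      have ag: "a (g i) = l ! i" if "i < ?d" for i
        using that ginj by (simp add: a_def the_inv_into_f_f)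
      have Fa: "F a = l"
        using l ag by (simp add: F_def list_eq_iff_nth_eq)
      then have "sum a UNIV = m" using sumF[of a] l by simp
      then have "a \<in> comps m" by (simp add: comps_def)
      then show "l \<in> F ` comps m" using Fa by blast
    qed
  qed
  have "card (comps m :: ('d \<Rightarrow> nat) set) = card (F ` comps m)" using card_image[OF inj] by simp
  also have "\<dots> = (m + ?d - 1) choose m" unfolding img by (rule card_length_sum_list)
  finally show ?thesis .
qed

lemma card_comps': "card (comps m :: ('d::finite \<Rightarrow> nat) set) = (m + CARD('d) - 1) choose (CARD('d) - 1)"
proof -
  have d1: "CARD('d) \<ge> 1" by (simp add: Suc_leI)
  have "(m + CARD('d) - 1) choose m = (m + CARD('d) - 1) choose (m + CARD('d) - 1 - m)"
    by (rule binomial_symmetric) (use d1 in linarith)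
  moreover have "m + CARD('d) - 1 - m = CARD('d) - 1" using d1 by simp
  ultimately show ?thesis using card_comps[where 'd='d, of m] by simp
qed

lemma hockey:
  assumes d: "d \<ge> 1"
  shows "(\<Sum>m<n. (m + d - 1) choose (d - 1)) = (n + d - 1) choose d"
proof (induction n)
  case 0 then show ?case using d by simp
next
  case (Suc n)
  obtain d' where d': "d = Suc d'" using d by (cases d) auto
  have "(\<Sum>m<Suc n. (m + d - 1) choose (d - 1)) = ((n + d - 1) choose d) + ((n + d - 1) choose (d - 1))"
    using Suc by simp
  also have "\<dots> = (Suc n + d - 1) choose d" using d' by simp
  finally show ?case .
qed


lemma box_single: "a \<in> comps e \<Longrightarrow> box e a {} = {a}"
  by (auto simp: box_def)

lemma sing_argmx:
  fixes p :: real assumes p: "p > 1" and a: "a \<in> comps e"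
  shows "\<exists>c. argmx p e c = {a}"
  using box_argmx[OF p, of a e a "{}"] box_single[OF a] by auto

lemma dl_inj: "e \<ge> 1 \<Longrightarrow> dl e i = dl e j \<Longrightarrow> i = j"
  by (metis dl_def not_one_le_zero)

lemma bp_sum: "sum (bp b T) UNIV = sum b UNIV + card (T::'d::finite set)"
  unfolding bp_def by (simp add: sum.distrib ind_sum)

lemma box_bp:
  assumes "a \<in> box e b (J::'d::finite set)"
  shows "{i. a i \<noteq> b i} \<subseteq> J" "a = bp b {i. a i \<noteq> b i}" "e = sum b UNIV + card {i. a i \<noteq> b i}"
proof -
  have ab: "\<And>i. a i = b i \<or> (i \<in> J \<and> a i = Suc (b i))" and ac: "sum a UNIV = e"
    using assms by (auto simp: box_def comps_def)
  show "{i. a i \<noteq> b i} \<subseteq> J" using ab by auto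
  show ab2: "a = bp b {i. a i \<noteq> b i}"
  proof
    fix i show "a i = bp b {i. a i \<noteq> b i} i" using ab[of i] by (auto simp: bp_def)
  qed
  have "sum (bp b {i. a i \<noteq> b i}) UNIV = sum b UNIV + card {i. a i \<noteq> b i}"
    by (rule bp_sum)
  then show "e = sum b UNIV + card {i. a i \<noteq> b i}" using ab2 ac by simp
qed

lemma box_subsing:
  assumes "\<not> (sum b UNIV < e \<and> e < sum b UNIV + card J)"
    and a: "a \<in> box e b (J::'d::finite set)" and a': "a' \<in> box e b J"
  shows "a = a'"
proof -
  let ?D = "{i. a i \<noteq> b i}" and ?D' = "{i. a' i \<noteq> b i}"
  note A = box_bp[OF a] and A' = box_bp[OF a']
  have "card ?D \<le> card J" "card ?D' \<le> card J" using A(1) A'(1) by (auto intro: card_mono)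
  then consider "card ?D = 0" "card ?D' = 0" | "card ?D = card J" "card ?D' = card J"
    using assms(1) A(3) A'(3) by linarith
  then have "?D = ?D'"
  proof cases
    case 1 then show ?thesis by simp
  next
    case 2
    then have "?D = J" "?D' = J"
      using card_subset_eq[OF finite A(1)] card_subset_eq[OF finite A'(1)] by auto
    then show ?thesis by simp
  qed
  then show ?thesis using A(2) A'(2) by metis
qed

lemma subsing_dim:
  assumes "M \<noteq> {}" "\<And>a a'. a \<in> M \<Longrightarrow> a' \<in> M \<Longrightarrow> a = a'"
  shows "aff_dim (f ` M) = 0"
proof -
  obtain a where "a \<in> M" using assms(1) by blast
  then have "M = {a}" using assms(2) by blast
  then show ?thesis by simp
qed

lemma proper_box_two:
  assumes r1: "sum b UNIV < e" and r2: "e < sum b UNIV + card J"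
  shows "\<exists>a\<in>box e b (J::'d::finite set). \<exists>a'\<in>box e b J. a \<noteq> a'"
proof -
  define r where "r = e - sum b UNIV"
  have r1': "r \<ge> 1" and r2': "r < card J" using r1 r2 by (auto simp: r_def)
  obtain T where T: "T \<subseteq> J" "card T = r" "finite T" using obtain_subset_with_card_n[of r J] r2' by auto
  have "T \<noteq> {}" using T r1' by auto
  then obtain i where i: "i \<in> T" by blast
  have "J - T \<noteq> {}" using T r2' by (metis Diff_eq_empty_iff card_mono finite leD)
  then obtain j where j: "j \<in> J" "j \<notin> T" by blast
  define T' where "T' = insert j (T - {i})"
  have cT': "card T' = r" using T i j r1' by (simp add: T'_def card_Diff_singleton)
  have b1: "bp b T \<in> box e b J" by (rule bp_box) (use T r1 in \<open>auto simp: r_def\<close>)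
  have b2: "bp b T' \<in> box e b J" by (rule bp_box) (use T i j cT' r1 in \<open>auto simp: r_def T'_def\<close>)
  have "i \<notin> T'" using i j by (auto simp: T'_def)
  then have "bp b T i \<noteq> bp b T' i" using i by (simp add: bp_def)
  then show ?thesis using b1 b2 by metis
qed

lemma box_one_pure:
  assumes e: "e \<ge> 2" and "dl e i \<in> box e b J" "dl e j \<in> box e b J"
  shows "i = j"
proof (rule ccontr)
  assume ij: "i \<noteq> j"
  have "dl e j i = b i \<or> dl e j i = Suc (b i)" using assms(3) by (auto simp: box_def)
  then have "b i = 0" using ij by (auto simp: dl_def)
  moreover have "dl e i i = b i \<or> dl e i i = Suc (b i)" using assms(2) by (auto simp: box_def)
  ultimately show False using e by (auto simp: dl_def)
qed

lemma proper_box_nonpure: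
  assumes e: "e \<ge> 2" and r1: "sum b UNIV < e" and r2: "e < sum b UNIV + card J"
  shows "\<exists>a\<in>box e b (J::'d::finite set). \<forall>i. a \<noteq> dl e i"
proof -
  obtain a a' where a: "a \<in> box e b J" "a' \<in> box e b J" "a \<noteq> a'" using proper_box_two[OF r1 r2] by blast
  show ?thesis
  proof (cases "\<forall>i. a \<noteq> dl e i")
    case True then show ?thesis using a by blast
  next
    case False
    then obtain i where i: "a = dl e i" by blast
    have "\<forall>j. a' \<noteq> dl e j"
    proof
      fix j show "a' \<noteq> dl e j"
      proof
        assume "a' = dl e j"
        then have "i = j" using box_one_pure[OF e] a i by blast
        then show False using a i \<open>a' = dl e j\<close> by simp
      qed
    qed
    then show ?thesis using a by blast
  qed
qed

lemma side_nonpure: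
  assumes e: "e \<ge> 2" and I: "card I \<ge> 2"
  shows "\<exists>a\<in>side e (I::'d::finite set). \<forall>i. a \<noteq> dl e i"
    and "\<exists>i j. i \<noteq> j \<and> dl e i \<in> side e I \<and> dl e j \<in> side e I"
proof -
  have Ine: "I \<noteq> {}" using I by auto
  then obtain i0 where i0: "i0 \<in> I" by blast
  have "card (I - {i0}) = card I - 1" using i0 by simp
  then have "card (I - {i0}) \<ge> 1" using I by simp
  then have "I - {i0} \<noteq> {}" by (cases "I - {i0} = {}") auto
  then obtain i1 where i1: "i1 \<in> I" "i1 \<noteq> i0" by blast
  have dlS: "dl e i \<in> side e I" if "i \<in> I" for i using that dl_comps by (auto simp: side_def dl_def)
  show "\<exists>i j. i \<noteq> j \<and> dl e i \<in> side e I \<and> dl e j \<in> side e I"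
    using dlS i0 i1 by blast
  define q where "q k = (if k = i0 then e - 1 else if k = i1 then 1 else 0)" for k
  have "sum q UNIV = (\<Sum>k\<in>UNIV. (if k = i0 then e - 1 else 0) + (if k = i1 then 1 else 0))"
    by (rule sum.cong) (use i1 in \<open>auto simp: q_def\<close>)
  also have "\<dots> = e" using e by (simp add: sum.distrib)
  finally have qS: "q \<in> side e I" using i0 i1 by (auto simp: side_def comps_def q_def)
  have "q \<noteq> dl e i" for i
  proof
    assume "q = dl e i"
    then have "q i0 = dl e i i0" by simp
    then show False using e i1 by (auto simp: q_def dl_def split: if_splits)
  qed
  then show "\<exists>a\<in>side e I. \<forall>i. a \<noteq> dl e i" using qS by blast
qed

lemma side_one:
  assumes "card I = 1" "a \<in> side e (I::'d::finite set)" "a' \<in> side e I"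
  shows "a = a'"
proof -
  obtain i where I: "I = {i}" using assms(1) card_1_singletonE by blast
  have dd: "a = dl e i" if "a \<in> side e I" for a
  proof -
    have z: "a k = 0" if "k \<noteq> i" for k using \<open>a \<in> side e I\<close> that I by (auto simp: side_def)
    have "sum a UNIV = (\<Sum>k\<in>UNIV. if k = i then a i else 0)" by (rule sum.cong) (use z in auto)
    then have "a i = e" using \<open>a \<in> side e I\<close> by (simp add: side_def comps_def)
    then show ?thesis using z by (auto simp: dl_def)
  qed
  show ?thesis using dd[OF assms(2)] dd[OF assms(3)] by simp
qed


definition Tf :: "nat \<Rightarrow> nat \<Rightarrow> ('d::finite \<Rightarrow> nat) set set" where
  "Tf e k = (\<lambda>I. dl e ` I) ` {I::'d set. card I = Suc k}"
definition Sf :: "nat \<Rightarrow> nat \<Rightarrow> ('d::finite \<Rightarrow> nat) set set" where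
  "Sf e k = side e ` {I::'d set. card I = k \<and> k \<ge> 2}"
definition Bset :: "nat \<Rightarrow> nat \<Rightarrow> ('d::finite \<Rightarrow> nat) set" where
  "Bset e k = {b. sum b UNIV < e \<and> e \<le> sum b UNIV + k}"
definition Bf :: "nat \<Rightarrow> nat \<Rightarrow> ('d::finite \<Rightarrow> nat) set set" where
  "Bf e k = (\<lambda>(b,J). box e b J) ` (Bset e k \<times> {J::'d set. card J = Suc k})"

lemma fam_eq:
  fixes p :: real
  assumes p: "p > 1" and e: "e \<ge> 2" and k: "k \<ge> 1"
  shows "{M. M \<in> range (argmx p e :: real^'d::finite \<Rightarrow> _) \<and> aff_dim (pt p ` M) = int k}
     = Tf e k \<union> Sf e k \<union> Bf e k"
proof
  have e1: "e \<ge> 1" using e by simp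
  show "{M. M \<in> range (argmx p e :: real^'d \<Rightarrow> _) \<and> aff_dim (pt p ` M) = int k} \<subseteq> Tf e k \<union> Sf e k \<union> Bf e k"
  proof
    fix M assume M: "M \<in> {M. M \<in> range (argmx p e :: real^'d \<Rightarrow> _) \<and> aff_dim (pt p ` M) = int k}"
    then have Mr: "M \<in> range (argmx p e :: real^'d \<Rightarrow> _)" and Md: "aff_dim (pt p ` M) = int k" by auto
    have "(\<exists>I. I \<noteq> {} \<and> M = dl e ` I) \<or> (\<exists>I. I \<noteq> {} \<and> M = side e I)
     \<or> (\<exists>b J. M = box e b J \<and> M \<noteq> ({}::('d \<Rightarrow> nat) set))"
      by (rule argmx_class[OF p e1, THEN iffD1, OF Mr])
    then show "M \<in> Tf e k \<union> Sf e k \<union> Bf e k"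
    proof (elim disjE exE conjE)
      fix I assume I: "I \<noteq> {}" "M = dl e ` I"
      have "int (card I) - 1 = int k" using top_dim[OF p e1 I(1)] I(2) Md by simp
      then have "card I = Suc k" by linarith
      then have "M \<in> Tf e k" unfolding Tf_def using I(2) by (intro image_eqI[of _ _ I]) auto
      then show ?thesis by simp
    next
      fix I assume I: "I \<noteq> {}" "M = side e I"
      show ?thesis
      proof (cases "card I \<ge> 2")
        case True
        then have "card I = k" using side_dim[OF p e True] I(2) Md by simp
        then have "M \<in> Sf e k" unfolding Sf_def using I(2) True by (intro image_eqI[of _ _ I]) auto
        then show ?thesis by simp
      next
        case False
        then have c1: "card I = 1" using I(1) by (simp add: card_gt_0_iff Suc_leI le_antisym not_le)
        obtain i where "i \<in> I" using I(1) by blast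
        then have "dl e i \<in> side e I" using dl_comps by (auto simp: side_def dl_def)
        then have "aff_dim (pt p ` M) = 0"
          by (intro subsing_dim) (use side_one[OF c1] I(2) in auto)
        then show ?thesis using Md k by simp
      qed
    next
      fix b J assume B: "M = box e b J" "M \<noteq> {}"
      show ?thesis
      proof (cases "sum b UNIV < e \<and> e < sum b UNIV + card J")
        case True
        then have "card J = Suc k" using box_dim[OF p, of b e J] B(1) Md by simp
        moreover then have "b \<in> Bset e k" using True by (simp add: Bset_def)
        ultimately have "M \<in> Bf e k" unfolding Bf_def using B(1) by (intro image_eqI[of _ _ "(b,J)"]) auto
        then show ?thesis by simp
      next
        case False
        then have "aff_dim (pt p ` M) = 0"
          by (intro subsing_dim) (use box_subsing[OF False] B in auto)
        then show ?thesis using Md k by simp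
      qed
    qed
  qed
  show "Tf e k \<union> Sf e k \<union> Bf e k \<subseteq> {M. M \<in> range (argmx p e :: real^'d \<Rightarrow> _) \<and> aff_dim (pt p ` M) = int k}"
  proof
    fix M :: "('d \<Rightarrow> nat) set" assume "M \<in> Tf e k \<union> Sf e k \<union> Bf e k"
    then consider "M \<in> Tf e k" | "M \<in> Sf e k" | "M \<in> Bf e k" by blast
    then consider (t) I where "card I = Suc k" "M = dl e ` I" | (s) I where "card I = k" "k \<ge> 2" "M = side e I"
      | (b) b J where "b \<in> Bset e k" "card J = Suc k" "M = box e b J"
    proof cases
      case 1 then show ?thesis using that(1) unfolding Tf_def by blast
    next
      case 2 then show ?thesis using that(2) unfolding Sf_def by blast
    next
      case 3 then show ?thesis using that(3) unfolding Bf_def by blast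
    qed
    then show "M \<in> {M. M \<in> range (argmx p e :: real^'d \<Rightarrow> _) \<and> aff_dim (pt p ` M) = int k}"
    proof cases
      case t
      then have I: "I \<noteq> {}" by auto
      have "M \<in> range (argmx p e :: real^'d \<Rightarrow> _)"
        by (rule argmx_class[OF p e1, THEN iffD2]) (intro disjI1 exI[of _ I], use I t(2) in simp)
      moreover have "aff_dim (pt p ` M) = int k" using top_dim[OF p e1 I] t by simp
      ultimately show ?thesis by simp
    next
      case s
      then have I: "I \<noteq> {}" by auto
      have "M \<in> range (argmx p e :: real^'d \<Rightarrow> _)"
        by (rule argmx_class[OF p e1, THEN iffD2]) (intro disjI2 disjI1 exI[of _ I], use I s(3) in simp)
      moreover have "aff_dim (pt p ` M) = int k" using side_dim[OF p e, of I] s by simp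
      ultimately show ?thesis by simp
    next
      case b
      have pr: "sum b UNIV < e" "e < sum b UNIV + card J" using b by (auto simp: Bset_def)
      have "M \<noteq> {}" using proper_box_two[OF pr] b(3) by blast
      then have "M \<in> range (argmx p e :: real^'d \<Rightarrow> _)"
        by (intro argmx_class[OF p e1, THEN iffD2] disjI2 exI[of _ b] exI[of _ J]) (use b(3) in simp)
      moreover have "aff_dim (pt p ` M) = int k" using box_dim[OF p pr] b by simp
      ultimately show ?thesis by simp
    qed
  qed
qed


lemma card_subsets: "card {I::'d::finite set. card I = n} = CARD('d) choose n"
  using n_subsets[of "UNIV::'d set" n] by simp

lemma card_Tf: assumes e: "e \<ge> 1" shows "card (Tf e k :: ('d::finite \<Rightarrow> nat) set set) = CARD('d) choose Suc k"
proof -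
  have "inj (dl e :: 'd \<Rightarrow> _)" using dl_inj[OF e] by (auto intro: injI)
  then have "inj_on (\<lambda>I::'d set. dl e ` I) {I. card I = Suc k}"
    by (auto simp: inj_on_def inj_image_eq_iff)
  then show ?thesis unfolding Tf_def by (simp add: card_image card_subsets)
qed

lemma dl_side: "e \<ge> 1 \<Longrightarrow> dl e i \<in> side e I \<longleftrightarrow> i \<in> I"
  using dl_comps by (auto simp: side_def dl_def)

lemma card_Sf: assumes e: "e \<ge> 1"
  shows "card (Sf e k :: ('d::finite \<Rightarrow> nat) set set) = (if k \<ge> 2 then CARD('d) choose k else 0)"
proof (cases "k \<ge> 2")
  case True
  have "inj_on (side e :: 'd set \<Rightarrow> _) {I. card I = k \<and> k \<ge> 2}"
  proof (rule inj_onI)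
    fix I I' :: "'d set" assume "side e I = side e I'"
    then show "I = I'" using dl_side[OF e] by blast
  qed
  then have "card (Sf e k :: ('d \<Rightarrow> nat) set set) = card {I::'d set. card I = k \<and> k \<ge> 2}"
    unfolding Sf_def by (rule card_image)
  then show ?thesis using True card_subsets[where 'd='d, of k] by simp
next
  case False then show ?thesis by (simp add: Sf_def)
qed

lemma proper_witness:
  assumes r1: "sum b UNIV < e" and r2: "e < sum b UNIV + card J" and i: "i \<in> (J::'d::finite set)"
  shows "\<exists>a\<in>box e b J. a i = b i" and "\<exists>a\<in>box e b J. a i = Suc (b i)"
proof -
  define r where "r = e - sum b UNIV"
  have r1': "r \<ge> 1" and r2': "r < card J" using r1 r2 by (auto simp: r_def)
  have cJi: "card (J - {i}) = card J - 1" using i by simp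
  have "r \<le> card (J - {i})" using r2' cJi by simp
  then obtain T where T: "T \<subseteq> J - {i}" "card T = r" "finite T"
    using obtain_subset_with_card_n by blast
  have "bp b T \<in> box e b J" by (rule bp_box) (use T r1 in \<open>auto simp: r_def\<close>)
  moreover have "bp b T i = b i" using T by (auto simp: bp_def)
  ultimately show "\<exists>a\<in>box e b J. a i = b i" by blast
  have "r - 1 \<le> card (J - {i})" using r2' cJi by simp
  then obtain T0 where T0: "T0 \<subseteq> J - {i}" "card T0 = r - 1" "finite T0"
    using obtain_subset_with_card_n by blast
  have "i \<notin> T0" using T0 by auto
  then have c: "card (insert i T0) = r" using T0 r1' by simp
  have "bp b (insert i T0) \<in> box e b J" by (rule bp_box) (use T0 i c r1 in \<open>auto simp: r_def\<close>)
  moreover have "bp b (insert i T0) i = Suc (b i)" by (simp add: bp_def)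
  ultimately show "\<exists>a\<in>box e b J. a i = Suc (b i)" by blast
qed

lemma box_inj:
  assumes p1: "sum b UNIV < e" "e < sum b UNIV + card J"
    and p2: "sum b' UNIV < e" "e < sum b' UNIV + card J'"
    and eq: "box e b J = box e b' (J'::'d::finite set)"
  shows "b = b' \<and> J = J'"
proof -
  have out: "a i = c i" if "a \<in> box e c K" "i \<notin> K" for a c i and K :: "'d set"
    using that by (auto simp: box_def)
  have inn: "a i = c i \<or> a i = Suc (c i)" if "a \<in> box e c K" for a c i and K :: "'d set"
    using that by (auto simp: box_def)
  have JJ: "K \<subseteq> K'" if q1: "sum c UNIV < e" "e < sum c UNIV + card K"
      and eq': "box e c K = box e c' K'" for c c' and K K' :: "'d set"
  proof
    fix i assume i: "i \<in> K"
    obtain a1 where a1: "a1 \<in> box e c K" "a1 i = c i" using proper_witness(1)[OF q1 i] by blast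
    obtain a2 where a2: "a2 \<in> box e c K" "a2 i = Suc (c i)" using proper_witness(2)[OF q1 i] by blast
    show "i \<in> K'"
    proof (rule ccontr)
      assume "i \<notin> K'"
      then have "a1 i = c' i" "a2 i = c' i" using out a1(1) a2(1) eq' by blast+
      then show False using a1(2) a2(2) by simp
    qed
  qed
  have J: "J = J'" using JJ[OF p1 eq] JJ[OF p2 eq[symmetric]] by blast
  have "b i = b' i" for i
  proof (cases "i \<in> J")
    case True
    obtain a1 where a1: "a1 \<in> box e b J" "a1 i = b i" using proper_witness(1)[OF p1 True] by blast
    have True': "i \<in> J'" using True J by simp
    obtain a2 where a2: "a2 \<in> box e b' J'" "a2 i = b' i" using proper_witness(1)[OF p2 True'] by blast
    have "a1 i = b' i \<or> a1 i = Suc (b' i)" using inn a1(1) eq by blast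
    moreover have "a2 i = b i \<or> a2 i = Suc (b i)" using inn a2(1) eq by blast
    ultimately show ?thesis using a1(2) a2(2) by linarith
  next
    case False
    obtain a1 where a1: "a1 \<in> box e b J" using proper_box_two[OF p1] by blast
    have "a1 i = b i" using out a1 False by blast
    moreover have "a1 i = b' i" using out a1 False J eq by blast
    ultimately show ?thesis by simp
  qed
  then show ?thesis using J by auto
qed

lemma Bset_UN: "Bset e k = (\<Union>m\<in>{e - k..<e}. comps m :: ('d::finite \<Rightarrow> nat) set)"
  by (auto simp: Bset_def comps_def)

lemma card_Bset:
  "card (Bset e k :: ('d::finite \<Rightarrow> nat) set)
     = ((e + CARD('d) - 1) choose CARD('d)) - ((e - k + CARD('d) - 1) choose CARD('d))"
proof -
  let ?d = "CARD('d)"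
  have d1: "?d \<ge> 1" by (simp add: Suc_leI)
  have "card (Bset e k :: ('d \<Rightarrow> nat) set) = (\<Sum>m\<in>{e - k..<e}. card (comps m :: ('d \<Rightarrow> nat) set))"
    unfolding Bset_UN by (rule card_UN_disjoint) (simp, simp add: finite_comps, auto simp: comps_def)
  also have "\<dots> = (\<Sum>m\<in>{e - k..<e}. (m + ?d - 1) choose (?d - 1))"
    by (simp add: card_comps')
  finally have c: "card (Bset e k :: ('d \<Rightarrow> nat) set) = (\<Sum>m\<in>{e - k..<e}. (m + ?d - 1) choose (?d - 1))" .
  have "{..<e} - {..<e - k} = {e - k..<e}" by auto
  then have "(\<Sum>m<e. (m + ?d - 1) choose (?d - 1)) = (\<Sum>m\<in>{e - k..<e}. (m + ?d - 1) choose (?d - 1)) + (\<Sum>m<e - k. (m + ?d - 1) choose (?d - 1))"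
    using sum.subset_diff[of "{..<e - k}" "{..<e}" "\<lambda>m. (m + ?d - 1) choose (?d - 1)"] by auto
  then show ?thesis using c hockey[OF d1, of e] hockey[OF d1, of "e - k"] by linarith
qed

lemma card_Bf:
  assumes k: "k \<ge> 1"
  shows "card (Bf e k :: ('d::finite \<Rightarrow> nat) set set) = card (Bset e k :: ('d \<Rightarrow> nat) set) * (CARD('d) choose Suc k)"
proof -
  have fin: "finite (Bset e k :: ('d \<Rightarrow> nat) set)" unfolding Bset_UN by (auto simp: finite_comps)
  have inj: "inj_on (\<lambda>(b,J). box e b J) ((Bset e k :: ('d \<Rightarrow> nat) set) \<times> {J::'d set. card J = Suc k})"
  proof (rule inj_onI)
    fix x y :: "('d \<Rightarrow> nat) \<times> 'd set"
    assume x: "x \<in> Bset e k \<times> {J::'d set. card J = Suc k}" and y: "y \<in> Bset e k \<times> {J::'d set. card J = Suc k}"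
      and eq0: "(\<lambda>(b,J). box e b J) x = (\<lambda>(b,J). box e b J) y"
    obtain b J where xb: "x = (b, J)" by (cases x)
    obtain b' J' where yb: "y = (b', J')" by (cases y)
    have b: "b \<in> Bset e k" "card J = Suc k" "b' \<in> Bset e k" "card J' = Suc k" using x y xb yb by auto
    have eq: "box e b J = box e b' J'" using eq0 xb yb by simp
    have "sum b UNIV < e" "e < sum b UNIV + card J" "sum b' UNIV < e" "e < sum b' UNIV + card J'"
      using b by (auto simp: Bset_def)
    then have "b = b' \<and> J = J'" using box_inj eq by blast
    then show "x = y" using xb yb by simp
  qed
  have "card (Bf e k :: ('d \<Rightarrow> nat) set set) = card ((Bset e k :: ('d \<Rightarrow> nat) set) \<times> {J::'d set. card J = Suc k})"
    unfolding Bf_def using card_image[OF inj] by simp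
  also have "\<dots> = card (Bset e k :: ('d \<Rightarrow> nat) set) * (CARD('d) choose Suc k)"
    by (simp add: card_cartesian_product card_subsets)
  finally show ?thesis .
qed

lemma card_fam:
  assumes e: "e \<ge> 2" and k: "k \<ge> 1"
  shows "card (Tf e k \<union> Sf e k \<union> Bf e k :: ('d::finite \<Rightarrow> nat) set set)
    = (CARD('d) choose Suc k) + (if k \<ge> 2 then CARD('d) choose k else 0) + card (Bset e k :: ('d \<Rightarrow> nat) set) * (CARD('d) choose Suc k)"
proof -
  have e1: "e \<ge> 1" using e by simp
  let ?T = "Tf e k :: ('d \<Rightarrow> nat) set set"
  let ?S = "Sf e k :: ('d \<Rightarrow> nat) set set"
  let ?B = "Bf e k :: ('d \<Rightarrow> nat) set set"
  have finP: "finite (X :: ('d \<Rightarrow> nat) set set)" if "X \<subseteq> Pow (\<Union>m\<le>e. comps m)" for X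
  proof (rule finite_subset[OF that])
    show "finite (Pow (\<Union>m\<le>e. comps m :: ('d \<Rightarrow> nat) set))" by (simp add: finite_comps)
  qed
  have subT: "?T \<subseteq> Pow (\<Union>m\<le>e. comps m)" using dl_comps by (auto simp: Tf_def)
  have subS: "?S \<subseteq> Pow (\<Union>m\<le>e. comps m)" by (auto simp: Sf_def side_def)
  have subB: "?B \<subseteq> Pow (\<Union>m\<le>e. comps m)" by (auto simp: Bf_def box_def)
  have pureT: "\<forall>a\<in>M. \<exists>i. a = dl e i" if "M \<in> ?T" for M using that by (auto simp: Tf_def)
  have TS: "?T \<inter> ?S = {}"
  proof (rule ccontr)
    assume "?T \<inter> ?S \<noteq> {}"
    then obtain M where M: "M \<in> ?T" "M \<in> ?S" by blast
    then obtain I where I: "card I = k" "k \<ge> 2" "M = side e I" by (auto simp: Sf_def)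
    obtain a where "a \<in> side e I" "\<forall>i. a \<noteq> dl e i" using side_nonpure(1)[OF e] I by auto
    then show False using pureT[OF M(1)] I(3) by blast
  qed
  have TB: "?T \<inter> ?B = {}"
  proof (rule ccontr)
    assume "?T \<inter> ?B \<noteq> {}"
    then obtain M where M: "M \<in> ?T" "M \<in> ?B" by blast
    then obtain b J where B: "b \<in> Bset e k" "card J = Suc k" "M = box e b J" by (auto simp: Bf_def)
    then have "sum b UNIV < e" "e < sum b UNIV + card J" by (auto simp: Bset_def)
    then obtain a where "a \<in> box e b J" "\<forall>i. a \<noteq> dl e i" using proper_box_nonpure[OF e] by blast
    then show False using pureT[OF M(1)] B(3) by blast
  qed
  have SB: "?S \<inter> ?B = {}"
  proof (rule ccontr)
    assume "?S \<inter> ?B \<noteq> {}"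
    then obtain M where M: "M \<in> ?S" "M \<in> ?B" by blast
    then obtain I where I: "card I = k" "k \<ge> 2" "M = side e I" by (auto simp: Sf_def)
    obtain b J where B: "M = box e b J" using M(2) by (auto simp: Bf_def)
    obtain i j where "i \<noteq> j" "dl e i \<in> side e I" "dl e j \<in> side e I" using side_nonpure(2)[OF e, of I] I by auto
    then show False using box_one_pure[OF e] I(3) B by metis
  qed
  have "card (?T \<union> ?S \<union> ?B) = card (?T \<union> ?S) + card (?B)"
    by (rule card_Un_disjoint) (use finP subT subS subB TB SB in auto)
  also have "card (?T \<union> ?S) = card (?T) + card (?S)"
    by (rule card_Un_disjoint) (use finP subT subS TS in auto)
  finally show ?thesis using card_Tf[OF e1, where 'd='d, of k] card_Sf[OF e1, where 'd='d, of k] card_Bf[OF k, where 'd='d, of e] by simp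
qed


theorem theorem1p3:
  fixes p e d :: nat
  assumes "prime p" and "e \<ge> 2" and "d = CARD('d::finite)" and "d \<ge> 2"
  defines "P \<equiv> (factorisation_polytope (p ^ e) :: (real ^ 'd) set)"
  shows "num_faces 0 P = (e + d - 1) choose (d - 1)
    \<and> num_faces 1 P = (d choose 2) + (d choose 2) * ((e + d - 2) choose (d - 1))
    \<and> (\<forall>k. 2 \<le> k \<and> k < d \<longrightarrow>
           int (num_faces k P) =
             int ((d + 1) choose (k + 1)) + int (d choose (k + 1)) * int ((e + d - 1) choose d)
             - int (d choose (k + 1)) * int ((e + d - 1 - k) choose d))
    \<and> num_faces d P = 1"
proof -
  define pr where "pr = real p"
  have p1: "pr > 1" using prime_gt_1_nat[OF assms(1)] by (simp add: pr_def)
  have e2: "e \<ge> 2" by (rule assms(2))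
  have e1: "e \<ge> 1" using e2 by simp
  have Peq: "P = convex hull (pt pr ` (comps e :: ('d \<Rightarrow> nat) set))"
    unfolding P_def factorisation_polytope_def pr_def using vf_eq[OF assms(1), where 'd='d, of e] by simp
  have sing: "\<And>a::'d \<Rightarrow> nat. a \<in> comps e \<Longrightarrow> \<exists>c. argmx pr e c = {a}"
    using sing_argmx[OF p1] by blast
  have nf: "num_faces k P = card {M::('d \<Rightarrow> nat) set. M \<in> range (argmx pr e :: real^'d \<Rightarrow> _) \<and> aff_dim (pt pr ` M) = int k}" for k
    unfolding Peq by (rule num_faces_argmx[OF p1 sing])
  have fk: "num_faces k P = (d choose Suc k) + (if k \<ge> 2 then d choose k else 0)
      + card (Bset e k :: ('d \<Rightarrow> nat) set) * (d choose Suc k)" if k: "k \<ge> 1" for k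
    unfolding nf fam_eq[OF p1 e2 k] using card_fam[OF e2 k, where 'd='d] assms(3) by simp
  have cB: "card (Bset e k :: ('d \<Rightarrow> nat) set) + ((e - k + d - 1) choose d) = (e + d - 1) choose d" for k
  proof -
    have "e - k + d - 1 \<le> e + d - 1" by simp
    then have "((e - k + d - 1) choose d) \<le> (e + d - 1) choose d" by (rule binomial_right_mono)
    then show ?thesis using card_Bset[where 'd='d, of e k] assms(3) by simp
  qed
  have f0: "num_faces 0 P = (e + d - 1) choose (d - 1)"
  proof -
    have eq: "{M::('d \<Rightarrow> nat) set. M \<in> range (argmx pr e :: real^'d \<Rightarrow> _) \<and> aff_dim (pt pr ` M) = int 0}
        = (\<lambda>a. {a}) ` comps e"
    proof
      show "{M::('d \<Rightarrow> nat) set. M \<in> range (argmx pr e :: real^'d \<Rightarrow> _) \<and> aff_dim (pt pr ` M) = int 0}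
        \<subseteq> (\<lambda>a. {a}) ` comps e"
      proof
        fix M :: "('d \<Rightarrow> nat) set"
        assume "M \<in> {M::('d \<Rightarrow> nat) set. M \<in> range (argmx pr e :: real^'d \<Rightarrow> _) \<and> aff_dim (pt pr ` M) = int 0}"
        then obtain c :: "real^'d" where c: "M = argmx pr e c" and ad: "aff_dim (pt pr ` M) = 0" by auto
        obtain x where x: "pt pr ` M = {x}" using ad aff_dim_eq_0 by blast
        obtain a where a: "a \<in> M" using argmx_ne c by blast
        have "M = {a}"
        proof
          show "M \<subseteq> {a}"
          proof
            fix a' assume "a' \<in> M"
            then have "pt pr a' \<in> pt pr ` M" by (rule imageI)
            moreover have "pt pr a \<in> pt pr ` M" using a by (rule imageI)
            ultimately have "pt pr a' = pt pr a" unfolding x by simp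
            then show "a' \<in> {a}" using pt_inj[OF p1] by (auto dest: injD)
          qed
        qed (use a in auto)
        moreover have "a \<in> comps e" using a c argmx_sub by blast
        ultimately show "M \<in> (\<lambda>a. {a}) ` comps e" by blast
      qed
      show "(\<lambda>a. {a}) ` comps e \<subseteq> {M::('d \<Rightarrow> nat) set. M \<in> range (argmx pr e :: real^'d \<Rightarrow> _) \<and> aff_dim (pt pr ` M) = int 0}"
      proof
        fix M assume "M \<in> (\<lambda>a. {a}) ` (comps e :: ('d \<Rightarrow> nat) set)"
        then obtain a where a: "a \<in> comps e" "M = {a}" by blast
        obtain c :: "real^'d" where "argmx pr e c = {a}" using sing[OF a(1)] by blast
        then show "M \<in> {M::('d \<Rightarrow> nat) set. M \<in> range (argmx pr e :: real^'d \<Rightarrow> _) \<and> aff_dim (pt pr ` M) = int 0}"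
          using a(2) by (auto intro: range_eqI[of _ _ c, symmetric])
      qed
    qed
    have "card ((\<lambda>a. {a}) ` (comps e :: ('d \<Rightarrow> nat) set)) = card (comps e :: ('d \<Rightarrow> nat) set)"
      by (rule card_image) (auto simp: inj_on_def)
    then show ?thesis using nf[of 0] eq card_comps'[where 'd='d, of e] assms(3) by simp
  qed
  have f1: "num_faces 1 P = (d choose 2) + (d choose 2) * ((e + d - 2) choose (d - 1))"
  proof -
    obtain d' where d': "d = Suc d'" using assms(4) by (cases d) auto
    have ed: "e + d - 1 = Suc (e + d - 2)" using e2 d' by simp
    have "(e + d - 1) choose d = Suc (e + d - 2) choose Suc d'" using ed d' by simp
    also have "\<dots> = ((e + d - 2) choose d') + ((e + d - 2) choose Suc d')" by (rule binomial_Suc_Suc)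
    finally have "(e + d - 1) choose d = ((e + d - 2) choose (d - 1)) + ((e + d - 2) choose d)"
      using d' by simp
    moreover have "e - 1 + d - 1 = e + d - 2" using e2 by simp
    ultimately have "card (Bset e 1 :: ('d \<Rightarrow> nat) set) = (e + d - 2) choose (d - 1)"
      using cB[of 1] by simp
    then show ?thesis using fk[of 1] by (simp add: numeral_2_eq_2 mult.commute)
  qed
  have fk2: "int (num_faces k P) =
             int ((d + 1) choose (k + 1)) + int (d choose (k + 1)) * int ((e + d - 1) choose d)
             - int (d choose (k + 1)) * int ((e + d - 1 - k) choose d)" if k: "2 \<le> k" "k < d" for k
  proof -
    have "(e - k + d - 1) choose d = (e + d - 1 - k) choose d"
    proof (cases "k \<le> e")
      case True then show ?thesis by (simp add: algebra_simps)
    next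
      case False
      then have l1: "e - k + d - 1 < d" and l2: "e + d - 1 - k < d" using k by auto
      show ?thesis by (simp only: binomial_eq_0[OF l1] binomial_eq_0[OF l2])
    qed
    then have cB': "int (card (Bset e k :: ('d \<Rightarrow> nat) set)) = int ((e + d - 1) choose d) - int ((e + d - 1 - k) choose d)"
      using cB[of k] by linarith
    have pas: "(d + 1) choose (k + 1) = (d choose k) + (d choose Suc k)" by simp
    have "int (num_faces k P) = int (d choose Suc k) + int (d choose k) + int (card (Bset e k :: ('d \<Rightarrow> nat) set)) * int (d choose Suc k)"
      using fk[of k] k by simp
    then show ?thesis using cB' pas by (simp add: algebra_simps)
  qed
  have fd: "num_faces d P = 1"
  proof -
    have "d \<ge> 1" using assms(4) by simp
    then show ?thesis using fk[of d] assms(4) by simp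
  qed
  show ?thesis using f0 f1 fk2 fd by blast
qed


end
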